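(* Let $n\ge 3$ and let $\boldsymbol d=(d_1,\dots,d_n)$ with $2\le d_1\le\cdots\le d_n$ and $d_n-1\le\sum_{i=1}^{n-1}(d_i-1)$. Then there exists a global section $f$ of $E=\bigoplus_{i=1}^n\mathcal O(\mathbf 1_i)^{\oplus(d_i-1)}$ on $\mathbb P^{\boldsymbol d}=\prod_{i=1}^n\mathbb P^{d_i-1}$ with real coefficients whose zero scheme $\mathcal Z(f)$ is reduced of dimension $0$ and contains at least two non-real points.
   Context: $\mathbf 1_i\in\mathbb Z^n$ has $0$ in position $i$ and $1$ elsewhere; $\mathcal O(\boldsymbol\alpha)$ is the line bundle of multidegree $\boldsymbol\alpha$ on $\mathbb P^{\boldsymbol d}$, with coordinates $\pi^{(i)}=(\pi^{(i)}_1,\dots,\pi^{(i)}_{d_i})$ on the $i$th factor. Thus a global section of $E$ is a tuple of $\sum_i(d_i-1)$ multihomogeneous polynomials, $d_i-1$ of which are multilinear in the variable groups $\pi^{(l)}$, $l\ne i$; it has real coefficients if all these polynomials do. $\mathcal Z(f)$ is the subscheme of $\mathbb P^{\boldsymbol d}$ cut out by these polynomials. *)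

theory Defs
  imports Complex_Main "HOL-Library.FuncSet"
begin

(* Conventions: factors indexed i < n (0-based); factor i is P^(d i - 1) with
   homogeneous coordinates pi^(i)_j, j < d i.  A (complex) point of the affine
   cone is p :: nat => nat => complex, p i j = pi^(i)_j.
   A multihomogeneous polynomial of multidegree 1_i is multilinear in the groups
   l ~= i: it is given by its coefficient tensor T, indexed by the tuples
   J in PiE ({0..<n} - {i}) (%l. {0..<d l}). *)

definition idx :: "nat \<Rightarrow> (nat \<Rightarrow> nat) \<Rightarrow> nat \<Rightarrow> (nat \<Rightarrow> nat) set" where
  "idx n d i = PiE ({0..<n} - {i}) (\<lambda>l. {0..<d l})"

definition mlform :: "nat \<Rightarrow> (nat \<Rightarrow> nat) \<Rightarrow> nat \<Rightarrow> ((nat \<Rightarrow> nat) \<Rightarrow> real)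
    \<Rightarrow> (nat \<Rightarrow> nat \<Rightarrow> complex) \<Rightarrow> complex" where
  "mlform n d i T p = (\<Sum>J\<in>idx n d i. complex_of_real (T J) * (\<Prod>l\<in>{0..<n} - {i}. p l (J l)))"

definition dform :: "nat \<Rightarrow> (nat \<Rightarrow> nat) \<Rightarrow> nat \<Rightarrow> ((nat \<Rightarrow> nat) \<Rightarrow> real)
    \<Rightarrow> (nat \<Rightarrow> nat \<Rightarrow> complex) \<Rightarrow> (nat \<Rightarrow> nat \<Rightarrow> complex) \<Rightarrow> complex" where
  "dform n d i T p v = (\<Sum>J\<in>idx n d i. complex_of_real (T J) *
      (\<Sum>m\<in>{0..<n} - {i}. v m (J m) * (\<Prod>l\<in>{0..<n} - {i, m}. p l (J l))))"

definition is_point :: "nat \<Rightarrow> (nat \<Rightarrow> nat) \<Rightarrow> (nat \<Rightarrow> nat \<Rightarrow> complex) \<Rightarrow> bool" where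
  "is_point n d p \<longleftrightarrow> (\<forall>i<n. \<exists>j<d i. p i j \<noteq> 0)"

definition proj_eq :: "nat \<Rightarrow> (nat \<Rightarrow> nat) \<Rightarrow> (nat \<Rightarrow> nat \<Rightarrow> complex) \<Rightarrow> (nat \<Rightarrow> nat \<Rightarrow> complex) \<Rightarrow> bool" where
  "proj_eq n d p q \<longleftrightarrow> (\<forall>i<n. \<exists>c. c \<noteq> 0 \<and> (\<forall>j<d i. q i j = c * p i j))"

(* a global section of E with real coefficients: f i k is the coefficient tensor of the
   k-th (k < d i - 1) component in the summand O(1_i)^(d_i - 1) *)
definition in_Z :: "nat \<Rightarrow> (nat \<Rightarrow> nat) \<Rightarrow> (nat \<Rightarrow> nat \<Rightarrow> (nat \<Rightarrow> nat) \<Rightarrow> real)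
    \<Rightarrow> (nat \<Rightarrow> nat \<Rightarrow> complex) \<Rightarrow> bool" where
  "in_Z n d f p \<longleftrightarrow> is_point n d p \<and> (\<forall>i<n. \<forall>k<d i - 1. mlform n d i (f i k) p = 0)"

(* Zariski tangent space of Z(f) at p is zero: kernel of the differential of all
   equations on the cone is spanned by the Euler directions of the factors *)
definition tangent_zero :: "nat \<Rightarrow> (nat \<Rightarrow> nat) \<Rightarrow> (nat \<Rightarrow> nat \<Rightarrow> (nat \<Rightarrow> nat) \<Rightarrow> real)
    \<Rightarrow> (nat \<Rightarrow> nat \<Rightarrow> complex) \<Rightarrow> bool" where
  "tangent_zero n d f p \<longleftrightarrow>
     (\<forall>v. (\<forall>i<n. \<forall>k<d i - 1. dform n d i (f i k) p v = 0) \<longrightarrow>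
          (\<forall>i<n. \<exists>c. \<forall>j<d i. v i j = c * p i j))"

(* Z(f) is reduced of dimension 0: nonempty, finitely many points, and reduced
   (zero tangent space, i.e. local ring a field) at each point *)
definition reduced_dim0 :: "nat \<Rightarrow> (nat \<Rightarrow> nat) \<Rightarrow> (nat \<Rightarrow> nat \<Rightarrow> (nat \<Rightarrow> nat) \<Rightarrow> real) \<Rightarrow> bool" where
  "reduced_dim0 n d f \<longleftrightarrow>
     (\<exists>p. in_Z n d f p) \<and>
     (\<exists>S. finite S \<and> (\<forall>p. in_Z n d f p \<longrightarrow> (\<exists>q\<in>S. proj_eq n d q p))) \<and>
     (\<forall>p. in_Z n d f p \<longrightarrow> tangent_zero n d f p)"

definition real_point :: "nat \<Rightarrow> (nat \<Rightarrow> nat) \<Rightarrow> (nat \<Rightarrow> nat \<Rightarrow> complex) \<Rightarrow> bool" where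
  "real_point n d p \<longleftrightarrow> (\<exists>r :: nat \<Rightarrow> nat \<Rightarrow> real. proj_eq n d p (\<lambda>i j. complex_of_real (r i j)))"

end

theory Submission
  imports Defs "HOL-Computational_Algebra.Polynomial"
begin

definition mom :: "nat \<Rightarrow> complex \<Rightarrow> (nat \<Rightarrow> complex) \<Rightarrow> complex" where
  "mom D t v = (\<Sum>j<D. t ^ j * v j)"

definition vpoly :: "nat \<Rightarrow> (nat \<Rightarrow> complex) \<Rightarrow> complex poly" where
  "vpoly D v = (\<Sum>j<D. monom (v j) j)"

definition canon :: "complex set \<Rightarrow> nat \<Rightarrow> complex" where
  "canon V j = coeff (\<Prod>t\<in>V. [:-t, 1:]) j"

lemma coeff_vpoly: "coeff (vpoly D v) j = (if j < D then v j else 0)"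
  by (simp add: vpoly_def coeff_sum)

lemma poly_vpoly: "poly (vpoly D v) t = mom D t v"
  by (simp add: vpoly_def mom_def poly_sum poly_monom mult.commute)

lemma degree_vpoly: "degree (vpoly D v) \<le> D - 1"
  unfolding vpoly_def
  by (rule degree_sum_le) (auto intro: order.trans[OF degree_monom_le])

lemma roots_bound:
  assumes "\<exists>j<D. v j \<noteq> 0"
  shows "finite {t. mom D t v = 0}" "card {t. mom D t v = 0} \<le> D - 1"
proof -
  have ne: "vpoly D v \<noteq> 0"
    using assms by (metis coeff_0 coeff_vpoly)
  show "finite {t. mom D t v = 0}"
    using poly_roots_finite[OF ne] by (simp add: poly_vpoly)
  show "card {t. mom D t v = 0} \<le> D - 1"
    using card_poly_roots_bound[OF ne] degree_vpoly[of D v] by (simp add: poly_vpoly)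
qed

lemma mom_poly:
  assumes "degree P < D"
  shows "mom D t (\<lambda>j. coeff P j) = poly P t"
proof -
  have "poly P t = (\<Sum>j\<le>degree P. coeff P j * t ^ j)" by (rule poly_altdef)
  also have "\<dots> = (\<Sum>j<D. coeff P j * t ^ j)"
    by (rule sum.mono_neutral_left) (use assms in \<open>auto simp: coeff_eq_0\<close>)
  finally show ?thesis by (simp add: mom_def mult.commute)
qed

lemma canon_facts:
  assumes "finite V"
  shows "degree (\<Prod>t\<in>V. [:-t, 1:]) = card V"
    and "canon V (card V) = 1"
    and "\<And>z. poly (\<Prod>t\<in>V. [:-t, 1:]) z = 0 \<longleftrightarrow> z \<in> V"
proof -
  show dg: "degree (\<Prod>t\<in>V. [:-t, 1:]) = card V"
    by (subst degree_prod_eq_sum_degree) auto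
  have "lead_coeff (\<Prod>t\<in>V. [:-t, 1:]) = 1"
    by (simp add: lead_coeff_prod)
  then show "canon V (card V) = 1" using dg by (simp add: canon_def)
  fix z show "poly (\<Prod>t\<in>V. [:-t, 1:]) z = 0 \<longleftrightarrow> z \<in> V"
    using assms by (simp add: poly_prod)
qed

lemma mom_canon:
  assumes "finite V" "card V < D"
  shows "mom D t (canon V) = poly (\<Prod>t\<in>V. [:-t, 1:]) t"
  using mom_poly[of "\<Prod>t\<in>V. [:-t, 1:]" D t] canon_facts(1)[OF assms(1)] assms(2)
  unfolding canon_def[abs_def] by simp

lemma mom_canon_zero_iff:
  assumes "finite V" "card V < D"
  shows "mom D z (canon V) = 0 \<longleftrightarrow> z \<in> V"
  using mom_canon[OF assms] canon_facts(3)[OF assms(1)] by simp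

lemma mom_diff: "mom D t (\<lambda>j. v j - c * w j) = mom D t v - c * mom D t w"
  by (simp add: mom_def algebra_simps sum_subtractf sum_distrib_left)

lemma kernel_canon:
  assumes "finite V" "card V = D - 1" "D \<ge> 1"
    and "\<forall>t\<in>V. mom D t v = 0"
  shows "\<forall>j<D. v j = v (D - 1) * canon V j"
proof (rule ccontr)
  assume neg: "\<not> (\<forall>j<D. v j = v (D - 1) * canon V j)"
  define w where "w j = v j - v (D - 1) * canon V j" for j
  have cV: "canon V (D - 1) = 1" using canon_facts(2)[OF assms(1)] unfolding assms(2) .
  have w0: "w (D - 1) = 0" unfolding w_def cV by simp
  have ex: "\<exists>j<D - 1. w j \<noteq> 0"
  proof -
    obtain j where "j < D" "v j \<noteq> v (D - 1) * canon V j" using neg by auto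
    then have "w j \<noteq> 0" "j \<noteq> D - 1" using w0 by (auto simp: w_def)
    with \<open>j < D\<close> show ?thesis by (intro exI[of _ j]) auto
  qed
  have momw: "mom D t w = mom (D - 1) t w" for t
  proof -
    have "{..<D} = insert (D - 1) {..<D - 1}" using assms(3) by auto
    then show ?thesis unfolding mom_def using w0 by simp
  qed
  have "V \<subseteq> {t. mom (D - 1) t w = 0}"
  proof
    fix t assume "t \<in> V"
    have "mom D t w = mom D t v - v (D - 1) * mom D t (canon V)"
      unfolding w_def by (rule mom_diff)
    also have "\<dots> = 0" using assms \<open>t \<in> V\<close> mom_canon_zero_iff[OF assms(1), of D t] by simp
    finally show "t \<in> {t. mom (D - 1) t w = 0}" by (simp add: momw)
  qed
  then have "card V \<le> card {t. mom (D - 1) t w = 0}"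
    using roots_bound(1)[OF ex] by (rule card_mono[rotated])
  also have "\<dots> \<le> D - 1 - 1" using roots_bound(2)[OF ex] .
  finally show False using assms(2) ex by linarith
qed


definition cml :: "nat \<Rightarrow> (nat \<Rightarrow> nat) \<Rightarrow> nat \<Rightarrow> ((nat \<Rightarrow> nat) \<Rightarrow> complex)
    \<Rightarrow> (nat \<Rightarrow> nat \<Rightarrow> complex) \<Rightarrow> complex" where
  "cml n d i T p = (\<Sum>J\<in>idx n d i. T J * (\<Prod>l\<in>{0..<n} - {i}. p l (J l)))"

lemma mlform_cml: "mlform n d i T p = cml n d i (\<lambda>J. complex_of_real (T J)) p"
  by (simp add: mlform_def cml_def)

lemma cml_cong: "(\<And>J. J \<in> idx n d i \<Longrightarrow> T J = T' J) \<Longrightarrow> cml n d i T p = cml n d i T' p"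
  by (simp add: cml_def)

lemma cml_lin: "cml n d i (\<lambda>J. a * T1 J + b * T2 J) p = a * cml n d i T1 p + b * cml n d i T2 p"
  by (simp add: cml_def algebra_simps sum.distrib sum_distrib_left)

lemma cml_prod:
  "cml n d i (\<lambda>J. \<Prod>l\<in>{0..<n} - {i}. c l (J l)) p = (\<Prod>l\<in>{0..<n} - {i}. \<Sum>j<d l. c l j * p l j)"
proof -
  have "cml n d i (\<lambda>J. \<Prod>l\<in>{0..<n} - {i}. c l (J l)) p
      = (\<Sum>J\<in>PiE ({0..<n} - {i}) (\<lambda>l. {0..<d l}). \<Prod>l\<in>{0..<n} - {i}. c l (J l) * p l (J l))"
    by (simp add: cml_def idx_def prod.distrib)
  also have "\<dots> = (\<Prod>l\<in>{0..<n} - {i}. \<Sum>j\<in>{0..<d l}. c l j * p l j)"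
    by (rule prod_sum_PiE[symmetric]) auto
  finally show ?thesis by (simp add: atLeast0LessThan)
qed

lemma dform_eq:
  "dform n d i T p v = (\<Sum>m\<in>{0..<n} - {i}. mlform n d i T (p(m := v m)))"
proof -
  have key: "(\<Prod>l\<in>{0..<n} - {i}. (p(m := v m)) l (J l)) = v m (J m) * (\<Prod>l\<in>{0..<n} - {i, m}. p l (J l))"
    if "m \<in> {0..<n} - {i}" for m J
  proof -
    have "(\<Prod>l\<in>{0..<n} - {i}. (p(m := v m)) l (J l))
        = (p(m := v m)) m (J m) * (\<Prod>l\<in>{0..<n} - {i} - {m}. (p(m := v m)) l (J l))"
      using that by (subst prod.remove[of _ m]) auto
    also have "(\<Prod>l\<in>{0..<n} - {i} - {m}. (p(m := v m)) l (J l)) = (\<Prod>l\<in>{0..<n} - {i, m}. p l (J l))"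
      by (rule prod.cong) auto
    finally show ?thesis by simp
  qed
  have "dform n d i T p v = (\<Sum>J\<in>idx n d i. \<Sum>m\<in>{0..<n} - {i}. complex_of_real (T J) * (v m (J m) * (\<Prod>l\<in>{0..<n} - {i, m}. p l (J l))))"
    by (simp add: dform_def sum_distrib_left)
  also have "\<dots> = (\<Sum>m\<in>{0..<n} - {i}. \<Sum>J\<in>idx n d i. complex_of_real (T J) * (v m (J m) * (\<Prod>l\<in>{0..<n} - {i, m}. p l (J l))))"
    by (rule sum.swap)
  also have "\<dots> = (\<Sum>m\<in>{0..<n} - {i}. mlform n d i T (p(m := v m)))"
    unfolding mlform_def by (rule sum.cong[OF refl], rule sum.cong[OF refl], subst key) auto
  finally show ?thesis .
qed

definition PA :: "nat \<Rightarrow> (nat \<Rightarrow> nat) \<Rightarrow> nat \<Rightarrow> complex \<Rightarrow> (nat \<Rightarrow> nat \<Rightarrow> complex) \<Rightarrow> complex" where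
  "PA n d i t y = (\<Prod>l\<in>{0..<n} - {i}. mom (d l) t (y l))"

definition DA :: "nat \<Rightarrow> (nat \<Rightarrow> nat) \<Rightarrow> nat \<Rightarrow> complex \<Rightarrow> (nat \<Rightarrow> nat \<Rightarrow> complex) \<Rightarrow> (nat \<Rightarrow> nat \<Rightarrow> complex) \<Rightarrow> complex" where
  "DA n d i t p v = (\<Sum>m\<in>{0..<n} - {i}. PA n d i t (p(m := v m)))"

lemma cml_pow: "cml n d i (\<lambda>J. t ^ (\<Sum>l\<in>{0..<n} - {i}. J l)) y = PA n d i t y"
proof -
  have "cml n d i (\<lambda>J. t ^ (\<Sum>l\<in>{0..<n} - {i}. J l)) y = cml n d i (\<lambda>J. \<Prod>l\<in>{0..<n} - {i}. t ^ (J l)) y"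
    by (simp add: power_sum)
  also have "\<dots> = PA n d i t y" using cml_prod[of n d i "\<lambda>l j. t ^ j" y] by (simp add: PA_def mom_def)
  finally show ?thesis .
qed


lemma prodsys:
  fixes \<tau> :: "nat \<times> nat \<Rightarrow> complex"
  assumes Q_def: "Q = (SIGMA i:{..<n}. {..<d i - 1})"
    and dl: "\<And>l. l < n \<Longrightarrow> 2 \<le> d l"
    and inj: "inj_on \<tau> Q"
    and pt: "is_point n d p"
    and sol: "\<And>i k. i < n \<Longrightarrow> k < d i - 1 \<Longrightarrow> PA n d i (\<tau> (i,k)) p = 0"
  shows "\<forall>l<n. \<exists>V\<subseteq>\<tau> ` Q. \<exists>c. c \<noteq> 0 \<and> (\<forall>j<d l. p l j = c * canon V j)"
    and "\<forall>v. (\<forall>i<n. \<forall>k<d i - 1. DA n d i (\<tau> (i,k)) p v = 0) \<longrightarrow>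
            (\<forall>l<n. \<exists>c. \<forall>j<d l. v l j = c * p l j)"
proof -
  define W where "W l = {q\<in>Q. fst q \<noteq> l \<and> mom (d l) (\<tau> q) (p l) = 0}" for l
  have finQ: "finite Q" unfolding Q_def by auto
  have nz: "\<exists>j<d l. p l j \<noteq> 0" if "l < n" for l using pt that by (auto simp: is_point_def)
  have cardW0: "card (W l) = card (\<tau> ` W l)" for l
    by (intro card_image[symmetric] inj_on_subset[OF inj]) (auto simp: W_def)
  have cardW: "card (W l) \<le> d l - 1" if "l < n" for l
  proof -
    have "card (\<tau> ` W l) \<le> card {t. mom (d l) t (p l) = 0}"
      by (intro card_mono roots_bound(1)[OF nz[OF that]]) (auto simp: W_def)
    also have "\<dots> \<le> d l - 1" by (rule roots_bound(2)[OF nz[OF that]])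
    finally show ?thesis using cardW0 by simp
  qed
  have cover: "\<exists>l<n. q \<in> W l" if "q \<in> Q" for q
  proof -
    have qS: "q \<in> (SIGMA i:{..<n}. {..<d i - 1})" using that Q_def by simp
    then obtain i k where q: "q = (i,k)" "i < n" "k < d i - 1" by blast
    have "PA n d i (\<tau> q) p = 0" using sol q by auto
    then have "\<exists>l\<in>{0..<n} - {i}. mom (d l) (\<tau> q) (p l) = 0" unfolding PA_def
      by (subst (asm) prod_zero_iff) auto
    then obtain l where l: "l \<in> {0..<n} - {i}" "mom (d l) (\<tau> q) (p l) = 0" by blast
    have "q \<in> W l" unfolding W_def using that q(1) l by auto
    moreover have "l < n" using l(1) by simp
    ultimately show ?thesis by blast
  qed
  define cnt where "cnt q = card {l\<in>{..<n}. q \<in> W l}" for q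
  have sum_eq: "(\<Sum>l<n. card (W l)) = (\<Sum>q\<in>Q. cnt q)"
  proof -
    have "(\<Sum>l<n. card (W l)) = (\<Sum>l<n. \<Sum>q\<in>Q. if q \<in> W l then 1 else 0)"
    proof (rule sum.cong[OF refl])
      fix l have "W l \<subseteq> Q" by (auto simp: W_def)
      then have "Q \<inter> {x. x \<in> W l} = W l" by auto
      then show "card (W l) = (\<Sum>q\<in>Q. if q \<in> W l then 1 else 0)"
        using finQ by (simp add: sum.If_cases)
    qed
    also have "\<dots> = (\<Sum>q\<in>Q. \<Sum>l<n. if q \<in> W l then 1 else 0)" by (rule sum.swap)
    also have "\<dots> = (\<Sum>q\<in>Q. cnt q)" unfolding cnt_def
    proof (rule sum.cong[OF refl])
      fix q
      have "{..<n} \<inter> {x. q \<in> W x} = {l \<in> {..<n}. q \<in> W l}" by auto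
      then show "(\<Sum>l<n. if q \<in> W l then 1 else 0) = card {l \<in> {..<n}. q \<in> W l}"
        by (simp add: sum.If_cases)
    qed
    finally show ?thesis .
  qed
  have cardQ: "card Q = (\<Sum>l<n. d l - 1)" unfolding Q_def by simp
  have cnt1: "1 \<le> cnt q" if qQ: "q \<in> Q" for q
  proof -
    obtain l where "l < n" "q \<in> W l" using cover[OF qQ] by blast
    then have "{l} \<subseteq> {l \<in> {..<n}. q \<in> W l}" by auto
    then have "card {l} \<le> cnt q" unfolding cnt_def by (intro card_mono) auto
    then show ?thesis by simp
  qed
  have "(\<Sum>q\<in>Q. 1) \<le> (\<Sum>q\<in>Q. cnt q)" by (rule sum_mono) (rule cnt1)
  then have A: "card Q \<le> (\<Sum>l<n. card (W l))" using sum_eq by simp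
  have B: "(\<Sum>l<n. card (W l)) \<le> (\<Sum>l<n. d l - 1)" by (rule sum_mono) (use cardW in auto)
  have AB: "(\<Sum>l<n. card (W l)) = (\<Sum>l<n. d l - 1)" using A B cardQ by simp
  have eqW: "card (W l) = d l - 1" if "l<n" for l
    using sum_mono_inv[OF AB _ _ finite_lessThan, of l] cardW that by auto
  have eqc: "cnt q = 1" if "q \<in> Q" for q
  proof -
    have "(\<Sum>q\<in>Q. (1::nat)) = (\<Sum>q\<in>Q. cnt q)" using A B cardQ sum_eq by simp
    then have "1 = cnt q" using sum_mono_inv[of "\<lambda>q. 1" Q cnt q] cnt1 that finQ by blast
    then show ?thesis by simp
  qed
  have uniq: "l' = l" if "q \<in> W l" "q \<in> W l'" "l < n" "l' < n" "q \<in> Q" for q l l'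
  proof (rule ccontr)
    assume "l' \<noteq> l"
    then have "{l, l'} \<subseteq> {l\<in>{..<n}. q \<in> W l}" using that by auto
    then have "card {l, l'} \<le> cnt q" unfolding cnt_def by (intro card_mono) auto
    then show False using eqc[OF that(5)] \<open>l' \<noteq> l\<close> by auto
  qed
  have ker: "\<forall>j<d l. u j = u (d l - 1) * canon (\<tau> ` W l) j"
    if "l < n" "\<forall>q\<in>W l. mom (d l) (\<tau> q) u = 0" for l u
  proof (rule kernel_canon)
    show "finite (\<tau> ` W l)" using finQ by (auto simp: W_def)
    show "card (\<tau> ` W l) = d l - 1" using eqW[OF that(1)] cardW0[of l] by simp
    show "1 \<le> d l" using dl[OF that(1)] by simp
    show "\<forall>t\<in>\<tau> ` W l. mom (d l) t u = 0" using that(2) by auto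
  qed
  have pprop: "p l (d l - 1) \<noteq> 0 \<and> (\<forall>j<d l. p l j = p l (d l - 1) * canon (\<tau> ` W l) j)" if "l < n" for l
  proof -
    have k: "\<forall>j<d l. p l j = p l (d l - 1) * canon (\<tau> ` W l) j"
      by (rule ker[OF that]) (auto simp: W_def)
    moreover have "p l (d l - 1) \<noteq> 0"
    proof
      assume "p l (d l - 1) = 0"
      then have "\<forall>j<d l. p l j = 0" using k by simp
      then show False using nz[OF that] by blast
    qed
    ultimately show ?thesis by blast
  qed
  show "\<forall>l<n. \<exists>V\<subseteq>\<tau> ` Q. \<exists>c. c \<noteq> 0 \<and> (\<forall>j<d l. p l j = c * canon V j)"
  proof (intro allI impI)
    fix l assume "l < n"
    then show "\<exists>V\<subseteq>\<tau> ` Q. \<exists>c. c \<noteq> 0 \<and> (\<forall>j<d l. p l j = c * canon V j)"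
  proof (intro exI[of _ "\<tau> ` W l"] conjI)
      show "\<tau> ` W l \<subseteq> \<tau> ` Q" by (auto simp: W_def)
      show "\<exists>c. c \<noteq> 0 \<and> (\<forall>j<d l. p l j = c * canon (\<tau> ` W l) j)"
        using pprop[OF \<open>l < n\<close>] by blast
    qed
  qed
  show "\<forall>v. (\<forall>i<n. \<forall>k<d i - 1. DA n d i (\<tau> (i,k)) p v = 0) \<longrightarrow>
            (\<forall>l<n. \<exists>c. \<forall>j<d l. v l j = c * p l j)"
  proof (intro allI impI)
    fix v l assume D: "\<forall>i<n. \<forall>k<d i - 1. DA n d i (\<tau> (i,k)) p v = 0" and l: "l < n"
    have vm: "mom (d l) (\<tau> q) (v l) = 0" if q: "q \<in> W l" for q
    proof -
      obtain i k where qik: "q = (i,k)" "i < n" "k < d i - 1" "i \<noteq> l"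
        using q by (auto simp: W_def Q_def)
      have qQ: "q \<in> Q" using q by (auto simp: W_def)
      have lI: "l \<in> {0..<n} - {i}" using qik l by auto
      have other: "PA n d i (\<tau> q) (p(m := v m)) = 0" if "m \<in> {0..<n} - {i}" "m \<noteq> l" for m
      proof -
        have "mom (d l) (\<tau> q) (p l) = 0" using q by (auto simp: W_def)
        then have z: "mom (d l) (\<tau> q) ((p(m := v m)) l) = 0" using that(2) by simp
        show ?thesis unfolding PA_def
          by (rule prod_zero, simp, rule bexI[of _ l]) (use lI z in auto)
      qed
      have "DA n d i (\<tau> q) p v = PA n d i (\<tau> q) (p(l := v l))"
        unfolding DA_def using lI other by (subst sum.remove[of _ l]) auto
      also have "\<dots> = mom (d l) (\<tau> q) (v l) * (\<Prod>l'\<in>{0..<n} - {i} - {l}. mom (d l') (\<tau> q) (p l'))"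
        unfolding PA_def using lI by (subst prod.remove[of _ l]) (auto intro!: prod.cong)
      finally have eq: "mom (d l) (\<tau> q) (v l) * (\<Prod>l'\<in>{0..<n} - {i} - {l}. mom (d l') (\<tau> q) (p l')) = 0"
        using D qik by auto
      have "(\<Prod>l'\<in>{0..<n} - {i} - {l}. mom (d l') (\<tau> q) (p l')) \<noteq> 0"
      proof
        assume "(\<Prod>l'\<in>{0..<n} - {i} - {l}. mom (d l') (\<tau> q) (p l')) = 0"
        then have "\<exists>l'\<in>{0..<n} - {i} - {l}. mom (d l') (\<tau> q) (p l') = 0"
          by (subst (asm) prod_zero_iff) auto
        then obtain l' where l': "l' \<in> {0..<n} - {i} - {l}" "mom (d l') (\<tau> q) (p l') = 0" by blast
        then have "q \<in> W l'" using qQ qik by (auto simp: W_def)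
        then show False using uniq[OF q _ l _ qQ] l' by auto
      qed
      then show ?thesis using eq by simp
    qed
    have kv: "\<forall>j<d l. v l j = v l (d l - 1) * canon (\<tau> ` W l) j" by (rule ker[OF l]) (use vm in auto)
    show "\<exists>c. \<forall>j<d l. v l j = c * p l j"
    proof (intro exI[of _ "v l (d l - 1) / p l (d l - 1)"] allI impI)
      fix j assume "j < d l"
      have e1: "v l j = v l (d l - 1) * canon (\<tau> ` W l) j" using kv \<open>j < d l\<close> by blast
      have e2: "p l j = p l (d l - 1) * canon (\<tau> ` W l) j" using pprop[OF l] \<open>j < d l\<close> by blast
      have e3: "p l (d l - 1) \<noteq> 0" using pprop[OF l] by blast
      show "v l j = v l (d l - 1) / p l (d l - 1) * p l j"
        unfolding e2 e1 using e3 by simp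
    qed
  qed
qed

definition stt :: "(nat \<Rightarrow> nat) \<Rightarrow> nat \<Rightarrow> nat" where
  "stt d i = (\<Sum>k<i. d k - 1)"

definition blk :: "(nat \<Rightarrow> nat) \<Rightarrow> nat \<Rightarrow> nat" where
  "blk d r = (LEAST l. r < stt d (Suc l))"

definition rot :: "nat \<Rightarrow> nat \<Rightarrow> nat \<Rightarrow> nat" where
  "rot N h r = (if r + h < N then r + h else r + h - N)"

lemma stt_0 [simp]: "stt d 0 = 0" by (simp add: stt_def)

lemma stt_Suc: "stt d (Suc i) = stt d i + (d i - 1)"
  by (simp add: stt_def)

lemma stt_mono: "i \<le> i' \<Longrightarrow> stt d i \<le> stt d i'"
  unfolding stt_def by (rule sum_mono2) auto

lemma blk_eq: "stt d i \<le> r \<Longrightarrow> r < stt d (Suc i) \<Longrightarrow> blk d r = i"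
  unfolding blk_def
proof (rule Least_equality)
  fix y assume "stt d i \<le> r" "r < stt d (Suc y)"
  show "i \<le> y"
  proof (rule ccontr)
    assume "\<not> i \<le> y"
    then have "stt d (Suc y) \<le> stt d i" by (intro stt_mono) auto
    then show False using \<open>stt d i \<le> r\<close> \<open>r < stt d (Suc y)\<close> by linarith
  qed
qed

lemma blk_ex:
  assumes "r < stt d n"
  shows "blk d r < n" "stt d (blk d r) \<le> r" "r < stt d (Suc (blk d r))"
proof -
  have n0: "n > 0" using assms by (cases n) auto
  have P: "r < stt d (Suc (n - 1))" using assms n0 by simp
  show "r < stt d (Suc (blk d r))" unfolding blk_def by (rule LeastI[of "\<lambda>l. r < stt d (Suc l)", OF P])
  have "blk d r \<le> n - 1" unfolding blk_def by (rule Least_le[of "\<lambda>l. r < stt d (Suc l)", OF P])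
  then show "blk d r < n" using n0 by linarith
  show "stt d (blk d r) \<le> r"
  proof (cases "blk d r")
    case 0 then show ?thesis by simp
  next
    case (Suc m)
    then have "m < (LEAST l. r < stt d (Suc l))" by (simp add: blk_def)
    then have "\<not> r < stt d (Suc m)" by (rule not_less_Least)
    then show ?thesis using Suc by simp
  qed
qed

lemma rot_lt: "r < N \<Longrightarrow> h \<le> N \<Longrightarrow> rot N h r < N"
  by (auto simp: rot_def)

lemma rot_inj: "r < N \<Longrightarrow> r' < N \<Longrightarrow> h \<le> N \<Longrightarrow> rot N h r = rot N h r' \<Longrightarrow> r = r'"
  by (auto simp: rot_def split: if_splits)

lemma pos_blk: "k < d i - 1 \<Longrightarrow> blk d (stt d i + k) = i"
  by (rule blk_eq) (auto simp: stt_Suc)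

lemma assignA:
  assumes Q_def: "Q = (SIGMA i:{..<n}. {..<d i - 1})"
    and N_def: "N = stt d n"
    and h1: "\<And>i. i < n \<Longrightarrow> d i - 1 \<le> h"
    and h2: "\<And>i. i < n \<Longrightarrow> h + (d i - 1) \<le> N"
    and h3: "h \<le> N"
    and sig: "\<And>q. \<sigma> q = blk d (rot N h (stt d (fst q) + snd q))"
  shows "\<And>i k. i < n \<Longrightarrow> k < d i - 1 \<Longrightarrow> \<sigma> (i,k) < n \<and> \<sigma> (i,k) \<noteq> i"
    and "\<And>l. l < n \<Longrightarrow> card {q\<in>Q. \<sigma> q = l} \<le> d l - 1"
proof -
  have posN: "stt d i + k < N" if "i < n" "k < d i - 1" for i k
  proof -
    have "stt d i + k < stt d (Suc i)" using that by (simp add: stt_Suc)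
    also have "\<dots> \<le> stt d n" using that by (intro stt_mono) auto
    finally show ?thesis using N_def by simp
  qed
  show "\<sigma> (i,k) < n \<and> \<sigma> (i,k) \<noteq> i" if ik: "i < n" "k < d i - 1" for i k
  proof -
    define r where "r = stt d i + k"
    have rN: "r < N" using posN[OF ik] r_def by simp
    have r'N: "rot N h r < stt d n" using rot_lt[OF rN h3] N_def by simp
    have s: "\<sigma> (i,k) = blk d (rot N h r)" using sig r_def by simp
    have "\<sigma> (i,k) < n" using blk_ex(1)[OF r'N] s by simp
    moreover have "\<sigma> (i,k) \<noteq> i"
    proof
      assume "\<sigma> (i,k) = i"
      then have A: "stt d i \<le> rot N h r" "rot N h r < stt d i + (d i - 1)"
        using blk_ex(2,3)[OF r'N] s by (auto simp: stt_Suc)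
      show False
      proof (cases "r + h < N")
        case True
        then show False using A h1[OF ik(1)] by (simp add: rot_def r_def)
      next
        case False
        then show False using A h2[OF ik(1)] ik(2) by (simp add: rot_def r_def)
      qed
    qed
    ultimately show ?thesis by blast
  qed
  show "card {q\<in>Q. \<sigma> q = l} \<le> d l - 1" if l: "l < n" for l
  proof -
    define g where "g q = rot N h (stt d (fst q) + snd q)" for q
    have "inj_on g Q"
    proof (rule inj_onI)
      fix q q' assume q: "q \<in> Q" "q' \<in> Q" "g q = g q'"
      obtain i k where ik: "q = (i,k)" "i < n" "k < d i - 1" using q(1) Q_def by auto
      obtain i' k' where ik': "q' = (i',k')" "i' < n" "k' < d i' - 1" using q(2) Q_def by auto
      have "stt d i + k = stt d i' + k'"
        using rot_inj[OF posN[OF ik(2,3)] posN[OF ik'(2,3)] h3] q(3) ik ik' by (simp add: g_def)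
      moreover have "i = i'" using pos_blk[of k d i] pos_blk[of k' d i'] ik(3) ik'(3) calculation by metis
      ultimately show "q = q'" using ik ik' by simp
    qed
    then have inj: "inj_on g {q\<in>Q. \<sigma> q = l}" by (rule inj_on_subset) auto
    have sub: "g ` {q\<in>Q. \<sigma> q = l} \<subseteq> {stt d l..<stt d l + (d l - 1)}"
    proof
      fix x assume "x \<in> g ` {q\<in>Q. \<sigma> q = l}"
      then obtain i k where ik: "x = g (i,k)" "i < n" "k < d i - 1" "\<sigma> (i,k) = l" using Q_def by auto
      have xN: "x < stt d n" using rot_lt[OF posN[OF ik(2,3)] h3] ik(1) N_def by (simp add: g_def)
      have "blk d x = l" using ik sig by (simp add: g_def)
      then show "x \<in> {stt d l..<stt d l + (d l - 1)}"
        using blk_ex(2,3)[OF xN] by (auto simp: stt_Suc)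
    qed
    have "card {q\<in>Q. \<sigma> q = l} = card (g ` {q\<in>Q. \<sigma> q = l})" using inj by (simp add: card_image)
    also have "\<dots> \<le> card {stt d l..<stt d l + (d l - 1)}" by (rule card_mono[OF _ sub]) simp
    finally show ?thesis by simp
  qed
qed

lemma mlform_cnj: "mlform n d i T (\<lambda>l j. cnj (p l j)) = cnj (mlform n d i T p)"
  by (simp add: mlform_def)

lemma in_Z_cnj:
  assumes "in_Z n d f p" shows "in_Z n d f (\<lambda>l j. cnj (p l j))"
  using assms by (auto simp: in_Z_def is_point_def mlform_cnj)

lemma mom_cnj: "cnj (mom D (cnj z) v) = mom D z (\<lambda>j. cnj (v j))"
  by (simp add: mom_def)

lemma crit:
  assumes l: "l < n" and z0: "mom (d l) z (p l) = 0" and z1: "mom (d l) (cnj z) (p l) \<noteq> 0"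
  shows "\<not> real_point n d p" "\<not> proj_eq n d p (\<lambda>l j. cnj (p l j))"
proof -
  show "\<not> real_point n d p"
  proof
    assume "real_point n d p"
    then obtain r c where c: "c \<noteq> 0" "\<forall>j<d l. complex_of_real (r l j) = c * p l j"
      using l unfolding real_point_def proj_eq_def by blast
    have "cnj (mom (d l) (cnj z) (p l)) = mom (d l) z (\<lambda>j. cnj (p l j))" by (rule mom_cnj)
    also have "\<dots> = mom (d l) z (\<lambda>j. cnj (complex_of_real (r l j) / c))"
      unfolding mom_def by (rule sum.cong) (use c in auto)
    also have "\<dots> = mom (d l) z (\<lambda>j. complex_of_real (r l j) / cnj c)"
      by simp
    also have "\<dots> = mom (d l) z (\<lambda>j. p l j * (c / cnj c))"
      unfolding mom_def by (rule sum.cong) (use c in auto)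
    also have "\<dots> = (c / cnj c) * mom (d l) z (p l)"
      by (simp add: mom_def sum_distrib_left algebra_simps)
    also have "\<dots> = 0" using z0 by simp
    finally show False using z1 by simp
  qed
  show "\<not> proj_eq n d p (\<lambda>l j. cnj (p l j))"
  proof
    assume "proj_eq n d p (\<lambda>l j. cnj (p l j))"
    then obtain c where c: "c \<noteq> 0" "\<forall>j<d l. cnj (p l j) = c * p l j"
      using l unfolding proj_eq_def by blast
    have "cnj (mom (d l) (cnj z) (p l)) = mom (d l) z (\<lambda>j. cnj (p l j))" by (rule mom_cnj)
    also have "\<dots> = mom (d l) z (\<lambda>j. c * p l j)"
      unfolding mom_def by (rule sum.cong) (use c in auto)
    also have "\<dots> = c * mom (d l) z (p l)"
      by (simp add: mom_def sum_distrib_left algebra_simps)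
    also have "\<dots> = 0" using z0 by simp
    finally show False using z1 by simp
  qed
qed

lemma two_points:
  assumes "in_Z n d f p" "l < n" "mom (d l) z (p l) = 0" "mom (d l) (cnj z) (p l) \<noteq> 0"
  shows "\<exists>p q. in_Z n d f p \<and> in_Z n d f q \<and> \<not> proj_eq n d p q \<and>
                  \<not> real_point n d p \<and> \<not> real_point n d q"
proof -
  let ?q = "\<lambda>l j. cnj (p l j)"
  have "mom (d l) (cnj z) (?q l) = cnj (mom (d l) z (p l))"
    using mom_cnj[of "d l" "cnj z" "p l"] by simp
  moreover have "mom (d l) (cnj (cnj z)) (?q l) = cnj (mom (d l) (cnj z) (p l))"
    using mom_cnj[of "d l" z "p l"] by (metis complex_cnj_cnj mom_cnj)
  ultimately have "mom (d l) (cnj z) (?q l) = 0" "mom (d l) (cnj (cnj z)) (?q l) \<noteq> 0"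
    using assms by auto
  then have "\<not> real_point n d ?q" using crit(1)[OF assms(2), of d "cnj z" ?q] by simp
  moreover have "\<not> real_point n d p" "\<not> proj_eq n d p ?q"
    using crit[of l n d z p] assms(2-4) by auto
  ultimately show ?thesis using assms(1) in_Z_cnj[OF assms(1)] by blast
qed

lemma finite_pts:
  assumes "\<And>p. in_Z n d f p \<Longrightarrow> (\<forall>l<n. \<exists>u\<in>C l. \<exists>c. c \<noteq> 0 \<and> (\<forall>j<d l. p l j = c * u j))"
    and "\<And>l. l < n \<Longrightarrow> finite (C l)"
  shows "\<exists>S. finite S \<and> (\<forall>p. in_Z n d f p \<longrightarrow> (\<exists>q\<in>S. proj_eq n d q p))"
proof (intro exI[of _ "PiE {..<n} C"] conjI allI impI)
  show "finite (PiE {..<n} C)" using assms(2) by (intro finite_PiE) auto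
  fix p assume "in_Z n d f p"
  then have "\<forall>l\<in>{..<n}. \<exists>u\<in>C l. \<exists>c. c \<noteq> 0 \<and> (\<forall>j<d l. p l j = c * u j)" using assms(1) by auto
  then obtain g where g: "\<forall>l\<in>{..<n}. g l \<in> C l \<and> (\<exists>c. c \<noteq> 0 \<and> (\<forall>j<d l. p l j = c * g l j))"
    by metis
  show "\<exists>q\<in>PiE {..<n} C. proj_eq n d q p"
  proof (intro bexI[of _ "restrict g {..<n}"])
    show "restrict g {..<n} \<in> PiE {..<n} C" using g by auto
    show "proj_eq n d (restrict g {..<n}) p" using g unfolding proj_eq_def by auto
  qed
qed

definition tauA :: "nat \<Rightarrow> (nat \<Rightarrow> nat) \<Rightarrow> nat \<times> nat \<Rightarrow> complex" where
  "tauA n d q = (if fst q = n - 1 \<and> snd q = 0 then \<i>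
     else if fst q = n - 1 \<and> snd q = d (n - 1) - 2 then - \<i>
     else of_nat (stt d (fst q) + snd q))"

definition fA :: "nat \<Rightarrow> (nat \<Rightarrow> nat) \<Rightarrow> nat \<Rightarrow> nat \<Rightarrow> (nat \<Rightarrow> nat) \<Rightarrow> real" where
  "fA n d i k J = (if i = n - 1 \<and> k = 0 then Re (\<i> ^ (\<Sum>l\<in>{0..<n} - {i}. J l))
     else if i = n - 1 \<and> k = d (n - 1) - 2 then Im (\<i> ^ (\<Sum>l\<in>{0..<n} - {i}. J l))
     else real (stt d i + k) ^ (\<Sum>l\<in>{0..<n} - {i}. J l))"

definition combA :: "nat \<Rightarrow> (nat \<Rightarrow> nat) \<Rightarrow> nat \<Rightarrow> nat \<Rightarrow> (complex \<Rightarrow> complex) \<Rightarrow> complex" where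
  "combA n d i k F = (if i = n - 1 \<and> k = 0 then (F \<i> + F (- \<i>)) / 2
     else if i = n - 1 \<and> k = d (n - 1) - 2 then (F \<i> - F (- \<i>)) / (2 * \<i>)
     else F (of_nat (stt d i + k)))"

lemma of_real_Re: "complex_of_real (Re z) = (1/2) * z + (1/2) * cnj z"
  using complex_add_cnj[of z] by (simp add: field_simps)

lemma of_real_Im: "complex_of_real (Im z) = (1/(2*\<i>)) * z + (- 1/(2*\<i>)) * cnj z"
  using complex_diff_cnj[of z] by (simp add: field_simps)

lemma fA_a: "i = n - 1 \<and> k = 0 \<Longrightarrow> fA n d i k J = Re (\<i> ^ (\<Sum>l\<in>{0..<n} - {i}. J l))"
  unfolding fA_def by auto
lemma fA_b: "\<not> (i = n - 1 \<and> k = 0) \<Longrightarrow> i = n - 1 \<and> k = d (n - 1) - 2 \<Longrightarrow>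
    fA n d i k J = Im (\<i> ^ (\<Sum>l\<in>{0..<n} - {i}. J l))"
  unfolding fA_def by auto
lemma fA_c: "\<not> (i = n - 1 \<and> k = 0) \<Longrightarrow> \<not> (i = n - 1 \<and> k = d (n - 1) - 2) \<Longrightarrow>
    fA n d i k J = real (stt d i + k) ^ (\<Sum>l\<in>{0..<n} - {i}. J l)"
  unfolding fA_def by auto
lemma combA_a: "i = n - 1 \<and> k = 0 \<Longrightarrow> combA n d i k F = (F \<i> + F (- \<i>)) / 2"
  unfolding combA_def by auto
lemma combA_b: "\<not> (i = n - 1 \<and> k = 0) \<Longrightarrow> i = n - 1 \<and> k = d (n - 1) - 2 \<Longrightarrow>
    combA n d i k F = (F \<i> - F (- \<i>)) / (2 * \<i>)"
  unfolding combA_def by auto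
lemma combA_c: "\<not> (i = n - 1 \<and> k = 0) \<Longrightarrow> \<not> (i = n - 1 \<and> k = d (n - 1) - 2) \<Longrightarrow>
    combA n d i k F = F (of_nat (stt d i + k))"
  unfolding combA_def by auto

lemma mlA: "mlform n d i (fA n d i k) y = combA n d i k (\<lambda>t. PA n d i t y)"
proof -
  let ?s = "\<lambda>J. \<Sum>l\<in>{0..<n} - {i}. J l"
  consider (a) "i = n - 1 \<and> k = 0" | (b) "\<not> (i = n - 1 \<and> k = 0)" "i = n - 1 \<and> k = d (n - 1) - 2"
    | (c) "\<not> (i = n - 1 \<and> k = 0)" "\<not> (i = n - 1 \<and> k = d (n - 1) - 2)" by blast
  then show ?thesis
  proof cases
    case a
    have "mlform n d i (fA n d i k) y = cml n d i (\<lambda>J. (1/2) * \<i> ^ ?s J + (1/2) * (- \<i>) ^ ?s J) y"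
      unfolding mlform_cml by (rule cml_cong) (simp add: fA_a[where i=i and n=n and k=k and d=d, OF a] of_real_Re)
    also have "\<dots> = combA n d i k (\<lambda>t. PA n d i t y)"
      by (simp only: cml_lin cml_pow combA_a[where i=i and n=n and k=k and d=d, OF a]) (simp add: field_simps)
    finally show ?thesis .
  next
    case b
    have "mlform n d i (fA n d i k) y = cml n d i (\<lambda>J. (1/(2*\<i>)) * \<i> ^ ?s J + (- 1/(2*\<i>)) * (- \<i>) ^ ?s J) y"
      unfolding mlform_cml by (rule cml_cong) (simp add: fA_b[where i=i and n=n and k=k and d=d, OF b] of_real_Im)
    also have "\<dots> = combA n d i k (\<lambda>t. PA n d i t y)"
      by (simp only: cml_lin cml_pow combA_b[where i=i and n=n and k=k and d=d, OF b]) (simp add: field_simps)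
    finally show ?thesis .
  next
    case c
    have "mlform n d i (fA n d i k) y = cml n d i (\<lambda>J. (of_nat (stt d i + k)) ^ ?s J) y"
      unfolding mlform_cml by (rule cml_cong) (simp add: fA_c[where i=i and n=n and k=k and d=d, OF c])
    also have "\<dots> = combA n d i k (\<lambda>t. PA n d i t y)"
      by (simp only: cml_pow combA_c[where i=i and n=n and k=k and d=d, OF c])
    finally show ?thesis .
  qed
qed

lemma combA_sum: "finite M \<Longrightarrow> combA n d i k (\<lambda>t. \<Sum>m\<in>M. G m t) = (\<Sum>m\<in>M. combA n d i k (G m))"
proof -
  assume M: "finite M"
  consider (a) "i = n - 1 \<and> k = 0" | (b) "\<not> (i = n - 1 \<and> k = 0)" "i = n - 1 \<and> k = d (n - 1) - 2"
    | (c) "\<not> (i = n - 1 \<and> k = 0)" "\<not> (i = n - 1 \<and> k = d (n - 1) - 2)" by blast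
  then show ?thesis
  proof cases
    case a show ?thesis by (simp only: combA_a[where i=i and n=n and k=k and d=d, OF a]) (simp add: sum.distrib sum_divide_distrib[symmetric])
  next
    case b show ?thesis by (simp only: combA_b[where i=i and n=n and k=k and d=d, OF b]) (simp only: sum_subtractf[symmetric] sum_divide_distrib[symmetric])
  next
    case c show ?thesis by (simp only: combA_c[where i=i and n=n and k=k and d=d, OF c])
  qed
qed

lemma dfA: "dform n d i (fA n d i k) p v = combA n d i k (\<lambda>t. DA n d i t p v)"
  unfolding dform_eq mlA DA_def by (rule combA_sum[symmetric]) simp

lemma combA_all:
  assumes "d (n - 1) \<ge> 3" "n \<ge> 1"
  shows "(\<forall>i<n. \<forall>k<d i - 1. combA n d i k (F i) = 0) \<longleftrightarrow>
         (\<forall>i<n. \<forall>k<d i - 1. F i (tauA n d (i,k)) = 0)"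
proof -
  have v1: "n - 1 < n" "0 < d (n - 1) - 1" "d (n - 1) - 2 < d (n - 1) - 1" "d (n - 1) - 2 \<noteq> 0"
    using assms by auto
  have cA: "combA n d (n - 1) 0 (F (n - 1)) = (F (n - 1) \<i> + F (n - 1) (- \<i>)) / 2"
    by (simp add: combA_def)
  have cB: "combA n d (n - 1) (d (n - 1) - 2) (F (n - 1)) = (F (n - 1) \<i> - F (n - 1) (- \<i>)) / (2 * \<i>)"
    using v1 by (simp add: combA_def)
  have key: "(combA n d (n - 1) 0 (F (n - 1)) = 0 \<and> combA n d (n - 1) (d (n - 1) - 2) (F (n - 1)) = 0)
      \<longleftrightarrow> (F (n - 1) \<i> = 0 \<and> F (n - 1) (- \<i>) = 0)"
    unfolding cA cB by (auto simp: field_simps)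
  show ?thesis
  proof
    assume H: "\<forall>i<n. \<forall>k<d i - 1. combA n d i k (F i) = 0"
    then have K: "F (n - 1) \<i> = 0 \<and> F (n - 1) (- \<i>) = 0" using key v1 by blast
    show "\<forall>i<n. \<forall>k<d i - 1. F i (tauA n d (i,k)) = 0"
    proof (intro allI impI)
      fix i k assume ik: "i < n" "k < d i - 1"
      show "F i (tauA n d (i,k)) = 0"
      proof (cases "(i = n - 1 \<and> k = 0) \<or> (i = n - 1 \<and> k = d (n - 1) - 2)")
        case True then show ?thesis using K v1 by (auto simp: tauA_def)
      next
        case False
        then have "combA n d i k (F i) = F i (tauA n d (i,k))" by (auto simp: combA_def tauA_def)
        then show ?thesis using H ik by auto
      qed
    qed
  next
    assume H: "\<forall>i<n. \<forall>k<d i - 1. F i (tauA n d (i,k)) = 0"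
    have K: "F (n - 1) \<i> = 0 \<and> F (n - 1) (- \<i>) = 0"
      using H[rule_format, OF v1(1) v1(2)] H[rule_format, OF v1(1) v1(3)] v1 by (auto simp: tauA_def)
    show "\<forall>i<n. \<forall>k<d i - 1. combA n d i k (F i) = 0"
    proof (intro allI impI)
      fix i k assume ik: "i < n" "k < d i - 1"
      show "combA n d i k (F i) = 0"
      proof (cases "(i = n - 1 \<and> k = 0) \<or> (i = n - 1 \<and> k = d (n - 1) - 2)")
        case True then show ?thesis using K v1 by (auto simp: combA_def)
      next
        case False
        then have "combA n d i k (F i) = F i (tauA n d (i,k))" by (auto simp: combA_def tauA_def)
        then show ?thesis using H ik by auto
      qed
    qed
  qed
qed

lemma point_from_assign:
  assumes Q_def: "Q = (SIGMA i:{..<n}. {..<d i - 1})"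
    and dl: "\<And>l. l < n \<Longrightarrow> 2 \<le> d l"
    and sa: "\<And>i k. i < n \<Longrightarrow> k < d i - 1 \<Longrightarrow> \<sigma> (i,k) < n \<and> \<sigma> (i,k) \<noteq> i"
    and sb: "\<And>l. l < n \<Longrightarrow> card {q\<in>Q. \<sigma> q = l} \<le> d l - 1"
    and P_def: "P = (\<lambda>l. canon (\<tau> ` {q\<in>Q. \<sigma> q = l}))"
  shows "is_point n d P"
    and "\<And>i k. i < n \<Longrightarrow> k < d i - 1 \<Longrightarrow> PA n d i (\<tau> (i,k)) P = 0"
    and "\<And>l z. l < n \<Longrightarrow> mom (d l) z (P l) = 0 \<longleftrightarrow> z \<in> \<tau> ` {q\<in>Q. \<sigma> q = l}"
proof -
  have finQ: "finite Q" using Q_def by auto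
  have fin: "finite (\<tau> ` {q\<in>Q. \<sigma> q = l})" for l using finQ by auto
  have cV: "card (\<tau> ` {q\<in>Q. \<sigma> q = l}) < d l" if "l < n" for l
  proof -
    have "card (\<tau> ` {q\<in>Q. \<sigma> q = l}) \<le> card {q\<in>Q. \<sigma> q = l}" using finQ by (intro card_image_le) auto
    then show ?thesis using sb[OF that] dl[OF that] by linarith
  qed
  show mz: "mom (d l) z (P l) = 0 \<longleftrightarrow> z \<in> \<tau> ` {q\<in>Q. \<sigma> q = l}" if "l < n" for l z
    unfolding P_def using mom_canon_zero_iff[OF fin cV[OF that]] by simp
  show "is_point n d P" unfolding is_point_def
  proof (intro allI impI)
    fix l assume l: "l < n"
    have "P l (card (\<tau> ` {q\<in>Q. \<sigma> q = l})) = 1" unfolding P_def by (rule canon_facts(2)[OF fin])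
    then show "\<exists>j<d l. P l j \<noteq> 0" using cV[OF l] by (intro exI[of _ "card (\<tau> ` {q\<in>Q. \<sigma> q = l})"]) auto
  qed
  show "PA n d i (\<tau> (i,k)) P = 0" if ik: "i < n" "k < d i - 1" for i k
  proof -
    have s: "\<sigma> (i,k) < n" "\<sigma> (i,k) \<noteq> i" using sa[OF ik] by auto
    have "(i,k) \<in> {q\<in>Q. \<sigma> q = \<sigma> (i,k)}" using ik Q_def by auto
    then have z: "mom (d (\<sigma> (i,k))) (\<tau> (i,k)) (P (\<sigma> (i,k))) = 0" using mz[OF s(1)] by blast
    show ?thesis unfolding PA_def
      by (rule prod_zero, simp, rule bexI[of _ "\<sigma> (i,k)"]) (use s z in auto)
  qed
qed

lemma tauA_inj:
  assumes "d (n - 1) \<ge> 3" "Q = (SIGMA i:{..<n}. {..<d i - 1})"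
  shows "inj_on (tauA n d) Q"
proof (rule inj_onI)
  fix q q' assume q: "q \<in> Q" "q' \<in> Q" and eq: "tauA n d q = tauA n d q'"
  obtain i k where ik: "q = (i,k)" "i < n" "k < d i - 1" using q(1) assms(2) by auto
  obtain i' k' where ik': "q' = (i',k')" "i' < n" "k' < d i' - 1" using q(2) assms(2) by auto
  have ni: "(of_nat m :: complex) \<noteq> \<i>" "(of_nat m :: complex) \<noteq> - \<i>"
    "\<i> \<noteq> (of_nat m :: complex)" "- \<i> \<noteq> (of_nat m :: complex)" for m
    by (auto simp: complex_eq_iff)
  have ii: "\<i> \<noteq> - \<i>" by (simp add: complex_eq_iff)
  have posinj: "stt d i + k = stt d i' + k' \<Longrightarrow> (i,k) = (i',k')"
    using pos_blk[of k d i] pos_blk[of k' d i'] ik(3) ik'(3) by (metis add_left_cancel)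
  have z: "d (n - 1) - 2 \<noteq> 0" using assms(1) by simp
  show "q = q'"
    using eq ni ii posinj z unfolding ik ik' tauA_def
    by (auto split: if_splits simp del: of_nat_add simp: of_nat_eq_iff)
qed


lemma caseA:
  assumes n3: "n \<ge> 3" and dl: "\<And>l. l < n \<Longrightarrow> 2 \<le> d l"
    and m0: "\<And>i. i < n \<Longrightarrow> d 0 \<le> d i" and m1: "\<And>i. i < n \<Longrightarrow> d i \<le> d (n - 1)"
    and sumc: "d (n - 1) - 1 \<le> (\<Sum>i<n - 1. d i - 1)"
    and big: "3 \<le> d (n - 1)"
  shows "\<exists>f :: nat \<Rightarrow> nat \<Rightarrow> (nat \<Rightarrow> nat) \<Rightarrow> real.
           reduced_dim0 n d f \<and>
           (\<exists>p q. in_Z n d f p \<and> in_Z n d f q \<and> \<not> proj_eq n d p q \<and>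
                  \<not> real_point n d p \<and> \<not> real_point n d q)"
proof -
  define f where "f = fA n d"
  define Q where "Q = (SIGMA i:{..<n}. {..<d i - 1})"
  define \<tau> where "\<tau> = tauA n d"
  have inj: "inj_on \<tau> Q" unfolding \<tau>_def by (rule tauA_inj[OF big Q_def])
  have n1: "n \<ge> 1" using n3 by simp
  have solZ: "in_Z n d f p \<longleftrightarrow> is_point n d p \<and> (\<forall>i<n. \<forall>k<d i - 1. PA n d i (\<tau> (i,k)) p = 0)" for p
    unfolding in_Z_def f_def mlA \<tau>_def using combA_all[of d n "\<lambda>i t. PA n d i t p", OF big n1] by simp
  have tanZ: "(\<forall>i<n. \<forall>k<d i - 1. dform n d i (f i k) p v = 0) \<longleftrightarrow>
      (\<forall>i<n. \<forall>k<d i - 1. DA n d i (\<tau> (i,k)) p v = 0)" for p v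
    unfolding f_def dfA \<tau>_def using combA_all[of d n "\<lambda>i t. DA n d i t p v", OF big n1] by simp
  have ana: "(\<forall>l<n. \<exists>V\<subseteq>\<tau> ` Q. \<exists>c. c \<noteq> 0 \<and> (\<forall>j<d l. p l j = c * canon V j)) \<and>
     (\<forall>v. (\<forall>i<n. \<forall>k<d i - 1. DA n d i (\<tau> (i,k)) p v = 0) \<longrightarrow> (\<forall>l<n. \<exists>c. \<forall>j<d l. v l j = c * p l j))"
    if "in_Z n d f p" for p
  proof -
    have pt: "is_point n d p" and sol: "\<And>i k. i < n \<Longrightarrow> k < d i - 1 \<Longrightarrow> PA n d i (\<tau> (i,k)) p = 0"
      using that solZ by auto
    show ?thesis using prodsys[OF Q_def dl inj pt sol] by blast
  qed
  have fin: "\<exists>S. finite S \<and> (\<forall>p. in_Z n d f p \<longrightarrow> (\<exists>q\<in>S. proj_eq n d q p))"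
  proof (rule finite_pts[where C = "\<lambda>l. canon ` Pow (\<tau> ` Q)"])
    fix p assume "in_Z n d f p"
    then have "\<forall>l<n. \<exists>V\<subseteq>\<tau> ` Q. \<exists>c. c \<noteq> 0 \<and> (\<forall>j<d l. p l j = c * canon V j)" using ana by blast
    then show "\<forall>l<n. \<exists>u\<in>canon ` Pow (\<tau> ` Q). \<exists>c. c \<noteq> 0 \<and> (\<forall>j<d l. p l j = c * u j)" by blast
  next
    fix l show "finite (canon ` Pow (\<tau> ` Q))" unfolding Q_def by auto
  qed
  have tan: "tangent_zero n d f p" if "in_Z n d f p" for p
    unfolding tangent_zero_def using ana[OF that] tanZ by blast
  define s where "s = d (n - 1) - 1"
  define N where "N = stt d n"
  have s2: "s \<ge> 2" using big s_def by simp
  have es: "d i - 1 \<le> s" if "i < n" for i using m1[OF that] s_def by simp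
  have Nsplit: "N = stt d (n - 1) + s"
  proof -
    have "n = Suc (n - 1)" using n1 by simp
    then have "stt d n = stt d (Suc (n - 1))" by simp
    then show ?thesis unfolding N_def s_def stt_Suc by simp
  qed
  have sttn1: "s \<le> stt d (n - 1)" using sumc unfolding s_def stt_def .
  have stt1: "stt d (Suc 0) = d 0 - 1" by (simp add: stt_Suc)
  define h where "h = (if d 0 = d (n - 1) then s + 1 else s)"
  have h1: "d i - 1 \<le> h" if "i < n" for i using es[OF that] h_def by auto
  have h2: "h + (d i - 1) \<le> N" if "i < n" for i
  proof (cases "d 0 = d (n - 1)")
    case True
    have all: "d i - 1 = s" if "i < n" for i using m0[OF that] m1[OF that] True s_def by simp
    have "N = (\<Sum>i<n. s)" unfolding N_def stt_def using all by simp
    then have Nn: "N = n * s" by simp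
    have ns: "3 * s \<le> n * s" using n3 by simp
    have hh: "h = s + 1" using h_def True by simp
    show ?thesis using hh Nn ns es[OF that] s2 by linarith
  next
    case False
    then show ?thesis using h_def es[OF that] Nsplit sttn1 by simp
  qed
  have h3: "h \<le> N" using h2[of 0] n3 by simp
  define \<sigma> where "\<sigma> q = blk d (rot N h (stt d (fst q) + snd q))" for q
  have sdef: "\<And>q. \<sigma> q = blk d (rot N h (stt d (fst q) + snd q))" by (simp add: \<sigma>_def)
  have asg1: "\<sigma> (i,k) < n \<and> \<sigma> (i,k) \<noteq> i" if "i < n" "k < d i - 1" for i k
    using assignA(1)[where Q=Q and N=N and h=h and \<sigma>=\<sigma> and n=n and d=d] Q_def N_def h1 h2 h3 sdef that
    by blast
  have asg2: "card {q\<in>Q. \<sigma> q = l} \<le> d l - 1" if "l < n" for l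
    using assignA(2)[where Q=Q and N=N and h=h and \<sigma>=\<sigma> and n=n and d=d] Q_def N_def h1 h2 h3 sdef that
    by blast
  define P where "P = (\<lambda>l. canon (\<tau> ` {q\<in>Q. \<sigma> q = l}))"
  have pfa1: "is_point n d P"
    using point_from_assign(1)[where Q=Q and n=n and d=d and \<sigma>=\<sigma> and P=P and \<tau>=\<tau>] Q_def dl asg1 asg2 P_def
    by blast
  have pfa2: "PA n d i (\<tau> (i,k)) P = 0" if "i < n" "k < d i - 1" for i k
    using point_from_assign(2)[where Q=Q and n=n and d=d and \<sigma>=\<sigma> and P=P and \<tau>=\<tau>] Q_def dl asg1 asg2 P_def that
    by blast
  have pfa3: "mom (d l) z (P l) = 0 \<longleftrightarrow> z \<in> \<tau> ` {q\<in>Q. \<sigma> q = l}" if "l < n" for l z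
    using point_from_assign(3)[where Q=Q and n=n and d=d and \<sigma>=\<sigma> and P=P and \<tau>=\<tau>] Q_def dl asg1 asg2 P_def that
    by blast
  have PZ: "in_Z n d f P" using solZ pfa1 pfa2 by blast
  define qA where "qA = (n - 1, 0::nat)"
  define qB where "qB = (n - 1, s - 1)"
  have qAQ: "qA \<in> Q" using n1 s2 s_def by (auto simp: qA_def Q_def)
  have qBQ: "qB \<in> Q" using n1 s2 s_def by (auto simp: qB_def Q_def)
  have tA: "\<tau> qA = \<i>" by (simp add: \<tau>_def tauA_def qA_def)
  have tB: "\<tau> qB = - \<i>" using s2 s_def by (simp add: \<tau>_def tauA_def qB_def numeral_2_eq_2)
  have pA: "stt d (fst qA) + snd qA = N - s" using Nsplit by (simp add: qA_def)
  have pB: "stt d (fst qB) + snd qB = N - 1" using Nsplit s2 by (simp add: qB_def)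
  have sN: "2 * s \<le> N" using Nsplit sttn1 by simp
  have split: "\<sigma> qA \<noteq> \<sigma> qB"
  proof (cases "d 0 = d (n - 1)")
    case True
    have hh: "h = s + 1" using True h_def by simp
    have rA: "rot N h (N - s) = 1" using hh sN s2 by (simp add: rot_def)
    have rB: "rot N h (N - 1) = s" using hh sN s2 by (simp add: rot_def)
    have a: "\<sigma> qA = 0" unfolding \<sigma>_def pA rA by (rule blk_eq) (use True s_def s2 stt1 in auto)
    have "\<sigma> qB \<noteq> 0"
    proof
      assume "\<sigma> qB = 0"
      then have "blk d s = 0" unfolding \<sigma>_def pB rB .
      moreover have "s < stt d n" using sN s2 N_def by simp
      ultimately have "s < stt d (Suc 0)" using blk_ex(3)[of s d n] by simp
      then show False using stt1 True s_def by simp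
    qed
    then show ?thesis using a by simp
  next
    case False
    have hh: "h = s" using False h_def by simp
    have rA: "rot N h (N - s) = 0" using hh sN s2 by (simp add: rot_def)
    have rB: "rot N h (N - 1) = s - 1" using hh sN s2 by (simp add: rot_def)
    have a: "\<sigma> qA = 0" unfolding \<sigma>_def pA rA by (rule blk_eq) (use dl[of 0] n1 stt1 in auto)
    have "\<sigma> qB \<noteq> 0"
    proof
      assume "\<sigma> qB = 0"
      then have "blk d (s - 1) = 0" unfolding \<sigma>_def pB rB .
      moreover have "s - 1 < stt d n" using sN s2 N_def by simp
      ultimately have "s - 1 < stt d (Suc 0)" using blk_ex(3)[of "s - 1" d n] by simp
      then show False using stt1 False m1[of 0] n1 s_def by simp
    qed
    then show ?thesis using a by simp
  qed
  define ls where "ls = \<sigma> qA"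
  have ls: "ls < n" using asg1[of "n - 1" 0] qAQ by (auto simp: ls_def qA_def Q_def)
  have z0: "mom (d ls) \<i> (P ls) = 0"
  proof -
    have "qA \<in> {q\<in>Q. \<sigma> q = ls}" using qAQ ls_def by simp
    then have "\<i> \<in> \<tau> ` {q\<in>Q. \<sigma> q = ls}" using tA by (metis image_eqI)
    then show ?thesis using pfa3[OF ls, of \<i>] by simp
  qed
  have z1: "mom (d ls) (cnj \<i>) (P ls) \<noteq> 0"
  proof
    assume "mom (d ls) (cnj \<i>) (P ls) = 0"
    then have "- \<i> \<in> \<tau> ` {q\<in>Q. \<sigma> q = ls}" using pfa3[OF ls, of "- \<i>"] by simp
    then obtain q where q: "q \<in> Q" "\<sigma> q = ls" "\<tau> q = \<tau> qB" using tB by auto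
    then have "q = qB" using inj qBQ by (auto dest: inj_onD)
    then show False using q split ls_def by simp
  qed
  have red: "reduced_dim0 n d f" unfolding reduced_dim0_def using PZ fin tan by blast
  show ?thesis using red two_points[OF PZ ls z0 z1] by blast
qed

definition tB :: "nat \<Rightarrow> real" where "tB q = 1 / (real q + 2)"
abbreviation tc :: "nat \<Rightarrow> complex" where "tc q \<equiv> complex_of_real (tB q)"

definition ea :: "nat \<Rightarrow> nat" where "ea q = (if q = 0 then 1 else if q = 1 then 2 else 0)"
definition eb :: "nat \<Rightarrow> nat" where "eb q = (if q = 0 then 2 else if q = 1 then 0 else 1)"
definition coreB :: "nat \<Rightarrow> nat \<Rightarrow> bool" where "coreB n q \<longleftrightarrow> q = 0 \<or> q = 1 \<or> q = n - 1"

definition AT :: "nat \<Rightarrow> nat \<Rightarrow> nat set" where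
  "AT n q = (if coreB n q then {0..<n} - {q, ea q, eb q} else {0..<n} - {q})"

definition Bf :: "(nat \<Rightarrow> complex) \<Rightarrow> (nat \<Rightarrow> complex) \<Rightarrow> complex" where
  "Bf u v = (u 0 - u 1) * v 1 - (u 0 + u 1) * v 0"

definition Bpart :: "nat \<Rightarrow> nat \<Rightarrow> (nat \<Rightarrow> nat \<Rightarrow> complex) \<Rightarrow> complex" where
  "Bpart n q y = (if coreB n q then Bf (y (ea q)) (y (eb q)) else 1)"

definition Lpart :: "nat \<Rightarrow> nat \<Rightarrow> (nat \<Rightarrow> nat \<Rightarrow> complex) \<Rightarrow> complex" where
  "Lpart n q y = (\<Prod>l\<in>AT n q. mom 2 (tc q) (y l))"

definition Bc :: "nat \<Rightarrow> nat \<Rightarrow> real" where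
  "Bc j k = (if j = 0 \<and> k = 1 then 1 else if j < 2 \<and> k < 2 then -1 else 0)"

definition cB :: "nat \<Rightarrow> nat \<Rightarrow> nat \<Rightarrow> nat \<Rightarrow> nat \<Rightarrow> real" where
  "cB q r s l j = (if l = ea q then (if j = r then 1 else 0) else if l = eb q then (if j = s then 1 else 0) else tB q ^ j)"

definition fB :: "nat \<Rightarrow> nat \<Rightarrow> (nat \<Rightarrow> nat) \<Rightarrow> real" where
  "fB n q J = (if coreB n q then (\<Sum>r<2. \<Sum>s<2. Bc r s * (\<Prod>l\<in>{0..<n} - {q}. cB q r s l (J l)))
     else (\<Prod>l\<in>{0..<n} - {q}. tB q ^ (J l)))"

lemma cml_sum: "finite R \<Longrightarrow> cml n d i (\<lambda>J. \<Sum>r\<in>R. T r J) p = (\<Sum>r\<in>R. cml n d i (T r) p)"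
  unfolding cml_def sum_distrib_right by (rule sum.swap)

lemma cml_scale: "cml n d i (\<lambda>J. a * T J) p = a * cml n d i T p"
  by (simp add: cml_def sum_distrib_left algebra_simps)

lemma core_facts:
  assumes "n \<ge> 3" "q < n" "coreB n q"
  shows "ea q < n" "eb q < n" "ea q \<noteq> q" "eb q \<noteq> q" "ea q \<noteq> eb q"
    and "{0..<n} - {q} = insert (ea q) (insert (eb q) (AT n q))"
    and "ea q \<notin> AT n q" "eb q \<notin> AT n q"
  using assms by (auto simp: ea_def eb_def coreB_def AT_def)

lemma finite_AT: "finite (AT n q)" by (simp add: AT_def)

lemma mom2: "mom 2 t v = v 0 + t * v 1"
  by (simp add: mom_def numeral_2_eq_2)

lemma mlB:
  assumes n3: "n \<ge> 3" and q: "q < n" and d2: "\<And>l. l < n \<Longrightarrow> d l = 2"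
  shows "mlform n d q (fB n q) y = Bpart n q y * Lpart n q y"
proof (cases "coreB n q")
  case True
  note cf = core_facts[OF n3 q True]
  let ?I = "{0..<n} - {q}"
  have "mlform n d q (fB n q) y
      = cml n d q (\<lambda>J. \<Sum>r<2. \<Sum>s<2. complex_of_real (Bc r s) * (\<Prod>l\<in>?I. complex_of_real (cB q r s l (J l)))) y"
    unfolding mlform_cml by (rule cml_cong) (simp add: fB_def True)
  also have "\<dots> = (\<Sum>r<2. \<Sum>s<2. complex_of_real (Bc r s) *
        (\<Prod>l\<in>?I. \<Sum>j<d l. complex_of_real (cB q r s l j) * y l j))"
    using cml_prod[of n d q "\<lambda>l j. complex_of_real (cB q _ _ l j)" y]
    by (simp add: cml_sum cml_scale)
  also have "\<dots> = (\<Sum>r<2. \<Sum>s<2. complex_of_real (Bc r s) * (y (ea q) r * y (eb q) s * Lpart n q y))"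
  proof (intro sum.cong refl)
    fix r s assume rs: "r \<in> {..<2::nat}" "s \<in> {..<2::nat}"
    have "(\<Prod>l\<in>?I. \<Sum>j<d l. complex_of_real (cB q r s l j) * y l j)
        = (\<Sum>j<d (ea q). complex_of_real (cB q r s (ea q) j) * y (ea q) j) *
          ((\<Sum>j<d (eb q). complex_of_real (cB q r s (eb q) j) * y (eb q) j) *
          (\<Prod>l\<in>AT n q. \<Sum>j<d l. complex_of_real (cB q r s l j) * y l j))"
      unfolding cf(6) using cf(5,7,8) finite_AT[of n q] by simp
    also have "(\<Sum>j<d (ea q). complex_of_real (cB q r s (ea q) j) * y (ea q) j) = y (ea q) r"
      using rs d2[OF cf(1)] by (auto simp: cB_def numeral_2_eq_2 lessThan_Suc)
    also have "(\<Sum>j<d (eb q). complex_of_real (cB q r s (eb q) j) * y (eb q) j) = y (eb q) s"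
      using rs d2[OF cf(2)] cf(5) by (auto simp: cB_def numeral_2_eq_2 lessThan_Suc)
    also have "(\<Prod>l\<in>AT n q. \<Sum>j<d l. complex_of_real (cB q r s l j) * y l j) = Lpart n q y"
      unfolding Lpart_def
    proof (rule prod.cong[OF refl])
      fix l assume l: "l \<in> AT n q"
      have "l \<in> {0..<n} - {q, ea q, eb q}" using l True unfolding AT_def by (simp only: if_True)
      then have "l < n" "l \<noteq> ea q" "l \<noteq> eb q" by auto
      then show "(\<Sum>j<d l. complex_of_real (cB q r s l j) * y l j) = mom 2 (tc q) (y l)"
        using d2 by (simp add: cB_def mom_def)
    qed
    finally show "complex_of_real (Bc r s) * (\<Prod>l\<in>?I. \<Sum>j<d l. complex_of_real (cB q r s l j) * y l j)
        = complex_of_real (Bc r s) * (y (ea q) r * y (eb q) s * Lpart n q y)" by (simp add: mult.assoc)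
  qed
  also have "\<dots> = Bf (y (ea q)) (y (eb q)) * Lpart n q y"
    by (simp add: Bf_def Bc_def numeral_2_eq_2 lessThan_Suc algebra_simps)
  finally show ?thesis by (simp add: Bpart_def True)
next
  case False
  let ?I = "{0..<n} - {q}"
  have "mlform n d q (fB n q) y = cml n d q (\<lambda>J. \<Prod>l\<in>?I. tc q ^ (J l)) y"
    unfolding mlform_cml by (rule cml_cong) (simp add: fB_def False)
  also have "\<dots> = (\<Prod>l\<in>?I. \<Sum>j<d l. tc q ^ j * y l j)"
    using cml_prod[of n d q "\<lambda>l j. tc q ^ j" y] by simp
  also have "\<dots> = Lpart n q y" unfolding Lpart_def AT_def using False d2
    by (intro prod.cong) (auto simp: mom_def)
  finally show ?thesis by (simp add: Bpart_def False)
qed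

definition nzv :: "(nat \<Rightarrow> complex) \<Rightarrow> bool" where "nzv u \<longleftrightarrow> u 0 \<noteq> 0 \<or> u 1 \<noteq> 0"
definition prp :: "(nat \<Rightarrow> complex) \<Rightarrow> (nat \<Rightarrow> complex) \<Rightarrow> bool" where
  "prp u v \<longleftrightarrow> (\<exists>c. c \<noteq> 0 \<and> u 0 = c * v 0 \<and> u 1 = c * v 1)"
definition mv :: "(nat \<Rightarrow> complex) \<Rightarrow> nat \<Rightarrow> complex" where
  "mv u = (\<lambda>j. if j = 0 then u 0 - u 1 else u 0 + u 1)"
definition ptv :: "complex \<Rightarrow> nat \<Rightarrow> complex" where
  "ptv t = (\<lambda>j. if j = 0 then - t else 1)"
definition wv :: "complex \<Rightarrow> nat \<Rightarrow> complex" where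
  "wv e = (\<lambda>j. if j = 0 then 1 else e)"

lemma cross:
  assumes "nzv w" "w 0 * v 1 = w 1 * v 0"
  shows "\<exists>c. v 0 = c * w 0 \<and> v 1 = c * w 1"
proof (cases "w 0 = 0")
  case True
  then have "w 1 \<noteq> 0" using assms(1) by (simp add: nzv_def)
  then show ?thesis using assms(2) True by (intro exI[of _ "v 1 / w 1"]) auto
next
  case False
  then show ?thesis using assms(2) by (intro exI[of _ "v 0 / w 0"]) (auto simp: field_simps)
qed

lemma linker:
  assumes "a \<noteq> 0 \<or> b \<noteq> 0" "a * x 0 + b * x 1 = 0" "a * v 0 + b * v 1 = 0" "nzv x"
  shows "\<exists>c. v 0 = c * x 0 \<and> v 1 = c * x 1"
proof -
  have "x 0 * v 1 = x 1 * v 0"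
  proof (cases "a = 0")
    case True
    then have "b \<noteq> 0" using assms(1) by simp
    then have "x 1 = 0" "v 1 = 0" using assms(2,3) True by auto
    then show ?thesis by simp
  next
    case False
    have "x 0 = - b * x 1 / a" "v 0 = - b * v 1 / a" using assms(2,3) False by (auto simp: field_simps eq_neg_iff_add_eq_0)
    then show ?thesis by simp
  qed
  then show ?thesis using cross[OF assms(4)] by simp
qed

lemma two_zero: "(a::complex) - b = 0 \<Longrightarrow> a + b = 0 \<Longrightarrow> a = 0 \<and> b = 0"
  by (metis add_diff_cancel_left' add_diff_eq diff_self eq_iff_diff_eq_0 mult_2 mult_eq_0_iff zero_neq_numeral)

lemma prp_sym: "prp u v \<Longrightarrow> prp v u"
proof -
  assume "prp u v"
  then obtain c where c: "c \<noteq> 0" "u 0 = c * v 0" "u 1 = c * v 1" unfolding prp_def by blast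
  show "prp v u" unfolding prp_def using c by (intro exI[of _ "1/c"]) auto
qed

lemma prp_trans: "prp u v \<Longrightarrow> prp v w \<Longrightarrow> prp u w"
proof -
  assume "prp u v" "prp v w"
  then obtain c c' where c: "c \<noteq> 0" "u 0 = c * v 0" "u 1 = c * v 1" "c' \<noteq> 0" "v 0 = c' * w 0" "v 1 = c' * w 1"
    unfolding prp_def by blast
  show "prp u w" unfolding prp_def using c by (intro exI[of _ "c * c'"]) auto
qed

lemma prp_mv: "prp u v \<Longrightarrow> prp (mv u) (mv v)"
  unfolding prp_def mv_def by (auto simp: algebra_simps)

lemma prp_mv_inv: "prp (mv u) (mv v) \<Longrightarrow> prp u v"
proof -
  assume "prp (mv u) (mv v)"
  then obtain c where c: "c \<noteq> 0" "u 0 - u 1 = c * (v 0 - v 1)" "u 0 + u 1 = c * (v 0 + v 1)"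
    unfolding prp_def mv_def by auto
  have "u 0 = ((u 0 - u 1) + (u 0 + u 1)) / 2" by simp
  also have "\<dots> = (c * (v 0 - v 1) + c * (v 0 + v 1)) / 2" using c by simp
  also have "\<dots> = c * v 0" by (simp add: algebra_simps)
  finally have a: "u 0 = c * v 0" .
  have "u 1 = ((u 0 + u 1) - (u 0 - u 1)) / 2" by simp
  also have "\<dots> = (c * (v 0 + v 1) - c * (v 0 - v 1)) / 2" using c by simp
  also have "\<dots> = c * v 1" by (simp add: algebra_simps)
  finally have "u 1 = c * v 1" .
  note a this
  then show ?thesis using c(1) unfolding prp_def by blast
qed

lemma nzv_mv: "nzv u \<Longrightarrow> nzv (mv u)"
  unfolding nzv_def mv_def using two_zero[of "u 0" "u 1"] by auto

lemma mv4: "prp ((mv ^^ 4) u) u"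
proof -
  have "(mv ^^ 4) u 0 = -4 * u 0" "(mv ^^ 4) u 1 = -4 * u 1"
    by (simp_all add: mv_def numeral_eq_Suc algebra_simps)
  then show ?thesis unfolding prp_def by (intro exI[of _ "-4"]) simp
qed

lemma pin_form:
  assumes "mom 2 t u = 0" "nzv u"
  shows "u 0 = - t * u 1" "u 1 \<noteq> 0"
proof -
  show e: "u 0 = - t * u 1" using assms(1) by (simp add: mom2 algebra_simps eq_neg_iff_add_eq_0)
  show "u 1 \<noteq> 0" using e assms(2) by (auto simp: nzv_def)
qed

lemma pin_unique:
  assumes "nzv u" "mom 2 s u = 0" "mom 2 t u = 0" shows "s = t"
  using pin_form[OF assms(2,1)] pin_form[OF assms(3,1)] by simp

lemma pin_prp: "mom 2 t u = 0 \<Longrightarrow> nzv u \<Longrightarrow> prp u (ptv t)"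
  using pin_form[of t u] unfolding prp_def ptv_def by (intro exI[of _ "u 1"]) auto

lemma edge_fwd:
  assumes "Bf u v = 0" "nzv u" "nzv v"
  shows "prp v (mv u)"
proof -
  have "mv u 0 * v 1 = mv u 1 * v 0" using assms(1) by (simp add: Bf_def mv_def)
  then obtain c where c: "v 0 = c * mv u 0" "v 1 = c * mv u 1" using cross[OF nzv_mv[OF assms(2)]] by blast
  then have "c \<noteq> 0" using assms(3) by (auto simp: nzv_def)
  then show ?thesis using c unfolding prp_def by blast
qed

lemma ker_first:
  assumes "Bf v y = 0" "Bf x y = 0" "nzv x" "nzv y"
  shows "\<exists>c. v 0 = c * x 0 \<and> v 1 = c * x 1"
proof (rule linker[of "y 1 - y 0" "- (y 1 + y 0)"])
  show "y 1 - y 0 \<noteq> 0 \<or> - (y 1 + y 0) \<noteq> 0" using assms(4) two_zero[of "y 1" "y 0"] unfolding nzv_def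
    by auto
  show "(y 1 - y 0) * x 0 + - (y 1 + y 0) * x 1 = 0" using assms(2) by (simp add: Bf_def algebra_simps)
  show "(y 1 - y 0) * v 0 + - (y 1 + y 0) * v 1 = 0" using assms(1) by (simp add: Bf_def algebra_simps)
qed (rule assms(3))

lemma ker_second:
  assumes "Bf y v = 0" "Bf y x = 0" "nzv x" "nzv y"
  shows "\<exists>c. v 0 = c * x 0 \<and> v 1 = c * x 1"
proof (rule linker[of "- (y 0 + y 1)" "y 0 - y 1"])
  show "- (y 0 + y 1) \<noteq> 0 \<or> y 0 - y 1 \<noteq> 0" using assms(4) two_zero[of "y 0" "y 1"] unfolding nzv_def
    by auto
  show "- (y 0 + y 1) * x 0 + (y 0 - y 1) * x 1 = 0" using assms(2) by (simp add: Bf_def algebra_simps)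
  show "- (y 0 + y 1) * v 0 + (y 0 - y 1) * v 1 = 0" using assms(1) by (simp add: Bf_def algebra_simps)
qed (rule assms(3))

lemma ker_pin:
  assumes "mom 2 t v = 0" "mom 2 t x = 0" "nzv x"
  shows "\<exists>c. v 0 = c * x 0 \<and> v 1 = c * x 1"
  by (rule linker[of 1 t]) (use assms in \<open>auto simp: mom2\<close>)

lemma tB_range: "0 < tB q" "tB q < 1"
  by (simp_all add: tB_def)

lemma tB_inj: "tB q = tB q' \<Longrightarrow> q = q'"
  by (simp add: tB_def)

lemma G1:
  assumes "mom 2 (of_real t) u = 0" "nzv u" "mom 2 (of_real t') v = 0" "nzv v" "Bf u v = 0"
    "0 < t" "t < 1" "0 < t'" "t' < 1"
  shows False
proof -
  note pu = pin_form[OF assms(1,2)] and pv = pin_form[OF assms(3,4)]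
  have "Bf u v = u 1 * v 1 * of_real (t' * (1 - t) - t - 1)"
    unfolding Bf_def pu(1) pv(1) by (simp add: algebra_simps)
  then have "of_real (t' * (1 - t) - t - 1) = (0::complex)" using assms(5) pu(2) pv(2) by simp
  then have e: "t' * (1 - t) - t - 1 = 0" by (simp only: of_real_eq_0_iff)
  have "t' * (1 - t) \<le> t' * 1" using assms by (intro mult_left_mono) auto
  then show False using e assms by linarith
qed

lemma G2:
  assumes "mom 2 (of_real t) u = 0" "nzv u" "Bf u v = 0" "nzv v" "Bf v w = 0"
    "mom 2 (of_real t') w = 0" "nzv w" "0 < t" "0 < t'"
  shows False
proof -
  note pu = pin_form[OF assms(1,2)] and pw = pin_form[OF assms(6,7)]
  obtain c where c: "c \<noteq> 0" "v 0 = c * mv u 0" "v 1 = c * mv u 1"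
    using edge_fwd[OF assms(3,2,4)] unfolding prp_def by blast
  have "Bf v w = c * u 1 * w 1 * of_real (- 2 - 2 * t * t')"
    unfolding Bf_def c(2,3) mv_def pu(1) pw(1) by (simp add: algebra_simps)
  then have "of_real (- 2 - 2 * t * t') = (0::complex)" using assms(5) c(1) pu(2) pw(2) by simp
  then have "- 2 - 2 * t * t' = 0" by (simp only: of_real_eq_0_iff)
  moreover have "0 < t * t'" using assms by simp
  ultimately show False by linarith
qed

lemma G3:
  assumes "mom 2 (of_real t) u = 0" "nzv u" "Bf u v = 0" "nzv v" "Bf v w = 0" "nzv w" "Bf w u = 0"
  shows False
proof -
  note pu = pin_form[OF assms(1,2)]
  obtain c where c: "c \<noteq> 0" "v 0 = c * mv u 0" "v 1 = c * mv u 1"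
    using edge_fwd[OF assms(3,2,4)] unfolding prp_def by blast
  obtain c' where c': "c' \<noteq> 0" "w 0 = c' * mv v 0" "w 1 = c' * mv v 1"
    using edge_fwd[OF assms(5,4,6)] unfolding prp_def by blast
  have v0: "v 0 = c * (- of_real t - 1) * u 1" unfolding c(2) mv_def pu(1) by (simp add: algebra_simps)
  have v1: "v 1 = c * (1 - of_real t) * u 1" unfolding c(3) mv_def pu(1) by (simp add: algebra_simps)
  have "Bf w u = c' * c * (u 1 * u 1) * of_real (- 2 - 2 * t * t)"
    unfolding Bf_def c'(2,3) mv_def pu(1) v0 v1 by (simp add: algebra_simps)
  then have "of_real (- 2 - 2 * t * t) = (0::complex)" using assms(7) c(1) c'(1) pu(2) by simp
  then have "- 2 - 2 * t * t = 0" by (simp only: of_real_eq_0_iff)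
  moreover have "0 \<le> t * t" by simp
  ultimately show False by linarith
qed

lemma edge_e:
  assumes "Bf u v = 0" "nzv u" "nzv v" "u 1 = e * u 0" "u 0 \<noteq> 0" "e * e = -1"
  shows "v 1 = e * v 0" "v 0 \<noteq> 0"
proof -
  obtain c where c: "c \<noteq> 0" "v 0 = c * mv u 0" "v 1 = c * mv u 1"
    using edge_fwd[OF assms(1,2,3)] unfolding prp_def by blast
  have e1: "1 + e = e * (1 - e)"
  proof -
    have "e * (1 - e) = e - e * e" by (simp add: right_diff_distrib)
    then show ?thesis using assms(6) by simp
  qed
  have "v 1 = c * u 0 * (1 + e)" using c(3) assms(4) by (simp add: mv_def algebra_simps)
  also have "\<dots> = e * (c * u 0 * (1 - e))" using e1 by simp
  also have "c * u 0 * (1 - e) = v 0" using c(2) assms(4) by (simp add: mv_def algebra_simps)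
  finally show "v 1 = e * v 0" .
  have "e \<noteq> 1" using assms(6) by auto
  then show "v 0 \<noteq> 0" using c(1,2) assms(4,5) by (simp add: mv_def)
qed

lemma full_tri:
  assumes "Bf u v = 0" "Bf v w = 0" "Bf w u = 0" "nzv u" "nzv v" "nzv w"
  shows "\<exists>e. e * e = -1 \<and> u 1 = e * u 0 \<and> u 0 \<noteq> 0 \<and> v 1 = e * v 0 \<and> v 0 \<noteq> 0 \<and> w 1 = e * w 0 \<and> w 0 \<noteq> 0"
proof -
  have "prp u (mv w)" using edge_fwd[OF assms(3,6,4)] .
  moreover have "prp w (mv v)" using edge_fwd[OF assms(2,5,6)] .
  moreover have "prp v (mv u)" using edge_fwd[OF assms(1,4,5)] .
  ultimately have "prp u (mv (mv (mv u)))" using prp_mv prp_trans by metis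
  then obtain K where K0: "K \<noteq> 0" "u 0 = K * mv (mv (mv u)) 0" "u 1 = K * mv (mv (mv u)) 1"
    unfolding prp_def by blast
  have m0: "mv (mv (mv u)) 0 = - 2 * u 0 - 2 * u 1" by (simp add: mv_def)
  have m1: "mv (mv (mv u)) 1 = 2 * u 0 - 2 * u 1" by (simp add: mv_def)
  have K: "K \<noteq> 0" "u 0 = K * (- 2 * u 0 - 2 * u 1)" "u 1 = K * (2 * u 0 - 2 * u 1)"
    using K0 m0 m1 by simp_all
  have "u 0 * u 1 = K * (- 2 * u 0 - 2 * u 1) * u 1" using K(2) by simp
  also have "\<dots> = K * (- 2 * u 1 * u 1 - 2 * u 0 * u 1)" by (simp add: algebra_simps)
  finally have A: "u 0 * u 1 = K * (- 2 * u 1 * u 1 - 2 * u 0 * u 1)" .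
  have "u 0 * u 1 = u 0 * (K * (2 * u 0 - 2 * u 1))" using K(3) by simp
  also have "\<dots> = K * (2 * u 0 * u 0 - 2 * u 0 * u 1)" by (simp add: algebra_simps)
  finally have B: "u 0 * u 1 = K * (2 * u 0 * u 0 - 2 * u 0 * u 1)" .
  note A B
  have "K * (2 * (u 0 * u 0 + u 1 * u 1)) = K * (2 * u 0 * u 0 - 2 * u 0 * u 1) - K * (- 2 * u 1 * u 1 - 2 * u 0 * u 1)"
    by (simp add: algebra_simps)
  also have "\<dots> = u 0 * u 1 - u 0 * u 1" by (simp only: A[symmetric] B[symmetric])
  also have "\<dots> = 0" by simp
  finally have "K * (2 * (u 0 * u 0 + u 1 * u 1)) = 0" .
  then have "2 * (u 0 * u 0 + u 1 * u 1) = 0" using K(1) mult_eq_0_iff by blast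
  then have sq: "u 0 * u 0 + u 1 * u 1 = 0" by (simp only: mult_eq_0_iff) simp
  have u0: "u 0 \<noteq> 0" using sq assms(4) by (auto simp: nzv_def)
  define e where "e = u 1 / u 0"
  have ue: "u 1 = e * u 0" using u0 by (simp add: e_def)
  have ee: "e * e = -1" using sq u0 unfolding e_def by (simp add: field_simps eq_neg_iff_add_eq_0)
  note ev = edge_e[OF assms(1,4,5) ue u0 ee]
  note ew = edge_e[OF assms(2,5,6) ev ee]
  show ?thesis using ue u0 ee ev ew by blast
qed

lemma Bf_e:
  assumes "x 1 = e * x 0" "e * e = -1"
  shows "Bf v x = - (1 + e) * x 0 * (v 1 - e * v 0)" "Bf x v = (1 - e) * x 0 * (v 1 - e * v 0)"
proof -
  have eeX: "e * (e * X) = - X" for X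
  proof - have "e * (e * X) = (e * e) * X" by (simp only: mult.assoc) then show ?thesis using assms(2) by simp qed
  show "Bf v x = - (1 + e) * x 0 * (v 1 - e * v 0)"
    unfolding Bf_def assms(1) by (simp add: algebra_simps eeX)
  show "Bf x v = (1 - e) * x 0 * (v 1 - e * v 0)"
    unfolding Bf_def assms(1) by (simp add: algebra_simps eeX)
qed

lemma circ:
  fixes e a0 a1 a2 s0 s1 s2 :: complex
  assumes ee: "e * e = -1" and a: "a0 \<noteq> 0" "a1 \<noteq> 0" "a2 \<noteq> 0"
    and E01: "- (1 + e) * a1 * s0 + (1 - e) * a0 * s1 = 0"
    and E12: "- (1 + e) * a2 * s1 + (1 - e) * a1 * s2 = 0"
    and E20: "- (1 + e) * a0 * s2 + (1 - e) * a2 * s0 = 0"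
  shows "s0 = 0 \<and> s1 = 0 \<and> s2 = 0"
proof -
  have eeX: "e * (e * X) = - X" for X
  proof - have "e * (e * X) = (e * e) * X" by (simp only: mult.assoc) then show ?thesis using ee by simp qed
  have ne: "1 - e \<noteq> 0" "1 + e \<noteq> 0"
  proof -
    show "1 - e \<noteq> 0" proof assume "1 - e = 0" then have "e = 1" by simp then show False using ee by simp qed
    show "1 + e \<noteq> 0" proof assume "1 + e = 0" then have "e = -1" by (simp add: eq_neg_iff_add_eq_0 add.commute) then show False using ee by simp qed
  qed
  have gen: "A * S' = e * B * S" if E: "- (1 + e) * B * S + (1 - e) * A * S' = 0" for A B S S'
  proof -
    have eeX2: "X * (e * e) = - X" for X using ee by simp
    have "(1 - e) * (A * S' - e * B * S) = - (1 + e) * B * S + (1 - e) * A * S'"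
      by (simp add: algebra_simps eeX eeX2 ee)
    then have "(1 - e) * (A * S' - e * B * S) = 0" using E by simp
    then show ?thesis using ne(1) by simp
  qed
  have f01: "a0 * s1 = e * a1 * s0" by (rule gen[OF E01])
  have f12: "a1 * s2 = e * a2 * s1" by (rule gen[OF E12])
  have f20: "a2 * s0 = e * a0 * s2" by (rule gen[OF E20])
  define P where "P = a0 * a1 * (a2 * s0)"
  have "P = a0 * a1 * (e * a0 * s2)" using f20 unfolding P_def by simp
  also have "\<dots> = e * a0 * a0 * (a1 * s2)" by (simp add: algebra_simps)
  also have "\<dots> = e * a0 * a0 * (e * a2 * s1)" using f12 by simp
  also have "\<dots> = (e * e) * a0 * a2 * (a0 * s1)" by (simp add: algebra_simps)
  also have "\<dots> = (e * e) * a0 * a2 * (e * a1 * s0)" using f01 by simp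
  also have "\<dots> = - e * P" unfolding P_def using ee by (simp add: algebra_simps eeX)
  finally have PP: "P = - e * P" .
  have "(1 + e) * P = P - (- e * P)" by (simp add: algebra_simps)
  also have "\<dots> = 0" unfolding PP[symmetric] by simp
  finally have "(1 + e) * P = 0" .
  then have s0: "s0 = 0" using ne(2) a unfolding P_def by simp
  then have s1: "s1 = 0" using f01 a by simp
  then have "s2 = 0" using f12 a by simp
  then show ?thesis using s0 s1 by simp
qed

lemma tri_bound:
  assumes "\<not> (e0 \<and> w0 \<and> w1)" "\<not> (e1 \<and> w1 \<and> w2)" "\<not> (e2 \<and> w2 \<and> w0)"
    "\<not> (e0 \<and> e1 \<and> w0 \<and> w2)" "\<not> (e1 \<and> e2 \<and> w1 \<and> w0)" "\<not> (e2 \<and> e0 \<and> w2 \<and> w1)"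
    "\<not> (e0 \<and> e1 \<and> e2 \<and> (w0 \<or> w1 \<or> w2))"
  shows "of_bool w0 + of_bool w1 + of_bool w2 + of_bool e0 + of_bool e1 + of_bool e2 \<le> (3::nat)"
  using assms by (cases w0; cases w1; cases w2; cases e0; cases e1; cases e2) auto

lemma tri_cases:
  assumes "of_bool w0 + of_bool w1 + of_bool w2 + of_bool e0 + of_bool e1 + of_bool e2 = (3::nat)"
    "\<not> (e0 \<and> e1 \<and> e2)"
    "\<not> (e0 \<and> w0 \<and> w1)" "\<not> (e1 \<and> w1 \<and> w2)" "\<not> (e2 \<and> w2 \<and> w0)"
  shows "(\<not>e0 \<and> \<not>e1 \<and> \<not>e2 \<and> w0 \<and> w1 \<and> w2) \<or> (e0 \<and> \<not>e1 \<and> \<not>e2 \<and> w2 \<and> (w0 \<or> w1)) \<or>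
    (e1 \<and> \<not>e0 \<and> \<not>e2 \<and> w0 \<and> (w1 \<or> w2)) \<or> (e2 \<and> \<not>e0 \<and> \<not>e1 \<and> w1 \<and> (w2 \<or> w0)) \<or>
    (((e0 \<and> e1) \<or> (e1 \<and> e2) \<or> (e2 \<and> e0)) \<and> (w0 \<or> w1 \<or> w2))"
  using assms by (cases e0; cases e1; cases e2; cases w0; cases w1; cases w2) simp_all

lemma tri_close:
  assumes "of_bool w0 + of_bool w1 + of_bool w2 + of_bool e0 + of_bool e1 + of_bool e2 = (3::nat)"
    "\<not> (e0 \<and> e1 \<and> e2)"
    "\<not> (e0 \<and> w0 \<and> w1)" "\<not> (e1 \<and> w1 \<and> w2)" "\<not> (e2 \<and> w2 \<and> w0)"
    and g: "w0 \<Longrightarrow> G0" "w1 \<Longrightarrow> G1" "w2 \<Longrightarrow> G2"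
    "e0 \<Longrightarrow> G0 \<longleftrightarrow> G1" "e1 \<Longrightarrow> G1 \<longleftrightarrow> G2" "e2 \<Longrightarrow> G2 \<longleftrightarrow> G0"
  shows "G0 \<and> G1 \<and> G2"
  using tri_cases[OF assms(1-5)] g by blast

lemma AT_sub: "AT n q \<subseteq> {0..<n} - {q}" by (auto simp: AT_def)

lemma Lpart_upd_out: "m \<notin> AT n q \<Longrightarrow> Lpart n q (x(m := vm)) = Lpart n q x"
  unfolding Lpart_def by (rule prod.cong) auto

lemma Lpart_upd_in: "m \<in> AT n q \<Longrightarrow>
    Lpart n q (x(m := vm)) = mom 2 (tc q) vm * (\<Prod>l\<in>AT n q - {m}. mom 2 (tc q) (x l))"
  unfolding Lpart_def by (subst prod.remove[of _ m]) (auto simp: finite_AT intro!: prod.cong)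

lemma Lpart_zero_other:
  assumes "l \<in> AT n q" "mom 2 (tc q) (x l) = 0" "m \<noteq> l"
  shows "Lpart n q (x(m := vm)) = 0"
  unfolding Lpart_def by (rule prod_zero, simp add: finite_AT, rule bexI[of _ l]) (use assms in auto)

lemma Bpart_upd_out: "(coreB n q \<longrightarrow> m \<noteq> ea q \<and> m \<noteq> eb q) \<Longrightarrow> Bpart n q (x(m := vm)) = Bpart n q x"
  unfolding Bpart_def by auto

lemma DB_pin:
  assumes n3: "n \<ge> 3" and q: "q < n" and l: "l \<in> AT n q" and z: "mom 2 (tc q) (x l) = 0"
    and B: "Bpart n q x \<noteq> 0" and P: "(\<Prod>l'\<in>AT n q - {l}. mom 2 (tc q) (x l')) \<noteq> 0"
    and D: "(\<Sum>m\<in>{0..<n} - {q}. Bpart n q (x(m := v m)) * Lpart n q (x(m := v m))) = 0"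
  shows "mom 2 (tc q) (v l) = 0"
proof -
  have lI: "l \<in> {0..<n} - {q}" using l AT_sub[of n q] by blast
  have lE: "coreB n q \<longrightarrow> l \<noteq> ea q \<and> l \<noteq> eb q" using l by (auto simp: AT_def)
  have "(\<Sum>m\<in>{0..<n} - {q}. Bpart n q (x(m := v m)) * Lpart n q (x(m := v m)))
      = Bpart n q (x(l := v l)) * Lpart n q (x(l := v l))"
    using lI Lpart_zero_other[of l n q x, OF l z] by (subst sum.remove[of _ l]) auto
  also have "\<dots> = Bpart n q x * (mom 2 (tc q) (v l) * (\<Prod>l'\<in>AT n q - {l}. mom 2 (tc q) (x l')))"
    using Bpart_upd_out[OF lE] Lpart_upd_in[OF l] by simp
  finally show ?thesis using D B P by simp
qed

lemma DB_edge:
  assumes n3: "n \<ge> 3" and q: "q < n" and c: "coreB n q" and B: "Bpart n q x = 0"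
    and L: "Lpart n q x \<noteq> 0"
    and D: "(\<Sum>m\<in>{0..<n} - {q}. Bpart n q (x(m := v m)) * Lpart n q (x(m := v m))) = 0"
  shows "Bf (v (ea q)) (x (eb q)) + Bf (x (ea q)) (v (eb q)) = 0"
proof -
  note cf = core_facts[OF n3 q c]
  have z: "(\<Sum>m\<in>AT n q. Bpart n q (x(m := v m)) * Lpart n q (x(m := v m))) = 0"
  proof (rule sum.neutral, rule ballI)
    fix m assume m: "m \<in> AT n q"
    then have "m \<noteq> ea q" "m \<noteq> eb q" using cf by auto
    then have "Bpart n q (x(m := v m)) = 0" using Bpart_upd_out[of n q m x "v m"] B by simp
    then show "Bpart n q (x(m := v m)) * Lpart n q (x(m := v m)) = 0" by simp
  qed
  have "(\<Sum>m\<in>{0..<n} - {q}. Bpart n q (x(m := v m)) * Lpart n q (x(m := v m)))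
     = Bpart n q (x(ea q := v (ea q))) * Lpart n q (x(ea q := v (ea q)))
       + (Bpart n q (x(eb q := v (eb q))) * Lpart n q (x(eb q := v (eb q)))
       + (\<Sum>m\<in>AT n q. Bpart n q (x(m := v m)) * Lpart n q (x(m := v m))))"
    unfolding cf(6) using cf(5,7,8) finite_AT[of n q] by simp
  also have "\<dots> = (Bf (v (ea q)) (x (eb q)) + Bf (x (ea q)) (v (eb q))) * Lpart n q x"
    using z cf(5) Lpart_upd_out[OF cf(7)] Lpart_upd_out[OF cf(8)] c
    by (simp add: Bpart_def algebra_simps)
  finally show ?thesis using D L by simp
qed

definition Gc :: "nat \<Rightarrow> (nat \<Rightarrow> complex) \<Rightarrow> bool" where
  "Gc n y \<longleftrightarrow> (\<exists>k<4. \<exists>q<n. prp y ((mv ^^ k) (ptv (tc q))))"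

lemma cand_edge:
  assumes "Bf u v = 0" "nzv u" "nzv v"
  shows "Gc n u \<longleftrightarrow> Gc n v"
proof
  have e: "prp v (mv u)" by (rule edge_fwd[OF assms])
  assume "Gc n u"
  then obtain k q where kq: "k < 4" "q < n" "prp u ((mv ^^ k) (ptv (tc q)))" unfolding Gc_def by blast
  have "prp v (mv ((mv ^^ k) (ptv (tc q))))" using e prp_mv[OF kq(3)] prp_trans by blast
  then have A: "prp v ((mv ^^ Suc k) (ptv (tc q)))" by simp
  show "Gc n v"
  proof (cases "k = 3")
    case True
    then have "prp v ((mv ^^ 4) (ptv (tc q)))" using A by (simp add: numeral_eq_Suc)
    then have "prp v ((mv ^^ 0) (ptv (tc q)))" using mv4 prp_trans by simp
    then show ?thesis unfolding Gc_def using kq(2) by (intro exI[of _ 0]) auto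
  next
    case False
    then show ?thesis unfolding Gc_def using kq A by (intro exI[of _ "Suc k"]) auto
  qed
next
  have e: "prp v (mv u)" by (rule edge_fwd[OF assms])
  assume "Gc n v"
  then obtain k q where kq: "k < 4" "q < n" "prp v ((mv ^^ k) (ptv (tc q)))" unfolding Gc_def by blast
  have m: "prp (mv u) ((mv ^^ k) (ptv (tc q)))" using prp_sym[OF e] kq(3) prp_trans by blast
  show "Gc n u"
  proof (cases k)
    case 0
    have "prp ((mv ^^ 0) (ptv (tc q))) ((mv ^^ 4) (ptv (tc q)))" using prp_sym[OF mv4] by simp
    then have "prp (mv u) (mv ((mv ^^ 3) (ptv (tc q))))" using m 0 prp_trans by (simp add: numeral_eq_Suc)
    then have "prp u ((mv ^^ 3) (ptv (tc q)))" by (rule prp_mv_inv)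
    then show ?thesis unfolding Gc_def using kq(2) by (intro exI[of _ 3]) auto
  next
    case (Suc k')
    then have "prp (mv u) (mv ((mv ^^ k') (ptv (tc q))))" using m by simp
    then have "prp u ((mv ^^ k') (ptv (tc q)))" by (rule prp_mv_inv)
    then show ?thesis unfolding Gc_def using kq Suc by (intro exI[of _ k']) auto
  qed
qed

definition Gt :: "(nat \<Rightarrow> complex) \<Rightarrow> (nat \<Rightarrow> complex) \<Rightarrow> bool" where
  "Gt v x \<longleftrightarrow> (\<exists>c. v 0 = c * x 0 \<and> v 1 = c * x 1)"

lemma Bf_scale1: "v 0 = c * x 0 \<Longrightarrow> v 1 = c * x 1 \<Longrightarrow> Bf v y = c * Bf x y"
  by (simp add: Bf_def algebra_simps)
lemma Bf_scale2: "v 0 = c * x 0 \<Longrightarrow> v 1 = c * x 1 \<Longrightarrow> Bf y v = c * Bf y x"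
  by (simp add: Bf_def algebra_simps)

lemma tan_edge:
  assumes "Bf xa xb = 0" "Bf va xb + Bf xa vb = 0" "nzv xa" "nzv xb"
  shows "Gt va xa \<longleftrightarrow> Gt vb xb"
proof
  assume "Gt va xa"
  then obtain c where c: "va 0 = c * xa 0" "va 1 = c * xa 1" unfolding Gt_def by blast
  have "Bf va xb = 0" using Bf_scale1[OF c] assms(1) by simp
  then have "Bf xa vb = 0" using assms(2) by simp
  then show "Gt vb xb" unfolding Gt_def using ker_second[OF _ assms(1,4,3)] by blast
next
  assume "Gt vb xb"
  then obtain c where c: "vb 0 = c * xb 0" "vb 1 = c * xb 1" unfolding Gt_def by blast
  have "Bf xa vb = 0" using Bf_scale2[OF c] assms(1) by simp
  then have "Bf va xb = 0" using assms(2) by simp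
  then show "Gt va xa" unfolding Gt_def using ker_first[OF _ assms(1,3,4)] by blast
qed

lemma sqrt_m1: "(e::complex) * e = -1 \<Longrightarrow> e = \<i> \<or> e = - \<i>"
proof -
  assume "e * e = -1"
  then have "(e - \<i>) * (e + \<i>) = 0" by (simp add: algebra_simps)
  then show ?thesis by (auto simp: eq_neg_iff_add_eq_0)
qed

lemma caseB_ana:
  assumes n3: "n \<ge> 3" and d2: "\<And>l. l < n \<Longrightarrow> d l = 2" and pt: "is_point n d x"
    and sol: "\<And>q. q < n \<Longrightarrow> Bpart n q x * Lpart n q x = 0"
  shows "\<forall>l<n. Gc n (x l) \<or> (\<exists>e. e * e = -1 \<and> prp (x l) (wv e))"
    and "\<forall>v. (\<forall>q<n. (\<Sum>m\<in>{0..<n} - {q}. Bpart n q (x(m := v m)) * Lpart n q (x(m := v m))) = 0)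
           \<longrightarrow> (\<forall>l<n. Gt (v l) (x l))"
proof -
  have nz: "nzv (x l)" if ln: "l < n" for l
  proof -
    obtain j where "j < d l" "x l j \<noteq> 0" using pt ln unfolding is_point_def by blast
    then have "j < 2" using d2[OF ln] by simp
    then have "j = 0 \<or> j = 1" by auto
    then show ?thesis using \<open>x l j \<noteq> 0\<close> unfolding nzv_def by auto
  qed
  define W where "W l = {q\<in>{..<n}. l \<in> AT n q \<and> mom 2 (tc q) (x l) = 0}" for l
  define E where "E = {q\<in>{..<n}. coreB n q \<and> Bpart n q x = 0}"
  have finW: "finite (W l)" for l by (simp add: W_def)
  have cW1: "card (W l) \<le> 1" if l: "l < n" for l
  proof -
    have "\<forall>a\<in>W l. \<forall>b\<in>W l. a = b"
    proof (intro ballI)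
      fix a b assume "a \<in> W l" "b \<in> W l"
      then have "mom 2 (tc a) (x l) = 0" "mom 2 (tc b) (x l) = 0" by (auto simp: W_def)
      then have "tc a = tc b" using pin_unique[OF nz[OF l]] by blast
      then show "a = b" using tB_inj by simp
    qed
    then show ?thesis using card_le_Suc0_iff_eq[OF finW] by simp
  qed
  have cWb: "card (W l) = of_bool (W l \<noteq> {})" if "l < n" for l
  proof (cases "W l = {}")
    case True then show ?thesis by simp
  next
    case False
    then have "0 < card (W l)" using finW[of l] by (simp add: card_gt_0_iff)
    then show ?thesis using cW1[OF that] False by simp
  qed
  have cover: "q \<in> E \<or> (\<exists>l<n. q \<in> W l)" if q: "q < n" for q
  proof (cases "Bpart n q x = 0")
    case True
    then have "coreB n q" by (auto simp: Bpart_def split: if_splits)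
    then show ?thesis using True q by (simp add: E_def)
  next
    case False
    then have "Lpart n q x = 0" using sol[OF q] by simp
    then have "\<exists>l\<in>AT n q. mom 2 (tc q) (x l) = 0" unfolding Lpart_def
      by (subst (asm) prod_zero_iff) (auto simp: finite_AT)
    then obtain l where l: "l \<in> AT n q" "mom 2 (tc q) (x l) = 0" by blast
    have "l < n" using l(1) AT_sub[of n q] by auto
    then show ?thesis using l q by (auto simp: W_def)
  qed
  define cnt where "cnt q = card {l\<in>{..<n}. q \<in> W l} + (if q \<in> E then 1 else 0)" for q
  have cnt1: "1 \<le> cnt q" if q: "q < n" for q
  proof (cases "q \<in> E")
    case True then show ?thesis by (simp add: cnt_def)
  next
    case False
    then obtain l where "l < n" "q \<in> W l" using cover[OF q] by blast
    then have "{l} \<subseteq> {l\<in>{..<n}. q \<in> W l}" by auto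
    then have "card {l} \<le> card {l\<in>{..<n}. q \<in> W l}" by (intro card_mono) auto
    then show ?thesis by (simp add: cnt_def)
  qed
  have S1: "(\<Sum>q<n. card {l\<in>{..<n}. q \<in> W l}) = (\<Sum>l<n. card (W l))"
  proof -
    have "(\<Sum>l<n. card (W l)) = (\<Sum>l<n. \<Sum>q<n. if q \<in> W l then 1 else 0)"
    proof (rule sum.cong[OF refl])
      fix l have "{..<n} \<inter> {q. q \<in> W l} = W l" by (auto simp: W_def)
      then show "card (W l) = (\<Sum>q<n. if q \<in> W l then 1 else 0)" by (simp add: sum.If_cases)
    qed
    also have "\<dots> = (\<Sum>q<n. \<Sum>l<n. if q \<in> W l then 1 else 0)" by (rule sum.swap)
    also have "\<dots> = (\<Sum>q<n. card {l\<in>{..<n}. q \<in> W l})"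
    proof (rule sum.cong[OF refl])
      fix q
      have "{..<n} \<inter> {x. q \<in> W x} = {l \<in> {..<n}. q \<in> W l}" by auto
      then show "(\<Sum>l<n. if q \<in> W l then 1 else 0) = card {l \<in> {..<n}. q \<in> W l}"
        by (simp add: sum.If_cases)
    qed
    finally show ?thesis by simp
  qed
  have S2: "(\<Sum>q<n. if q \<in> E then 1 else 0) = card E"
  proof -
    have "{..<n} \<inter> {q. q \<in> E} = E" by (auto simp: E_def)
    then show ?thesis by (simp add: sum.If_cases)
  qed
  have dist: "0 \<noteq> n - 1" "1 \<noteq> n - 1" "(0::nat) \<noteq> 1" using n3 by auto
  have S3: "card E = of_bool (n - 1 \<in> E) + of_bool (0 \<in> E) + of_bool (1 \<in> E)"
  proof -
    have sub: "E \<subseteq> {0, 1, n - 1}" by (auto simp: E_def coreB_def)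
    have "{0, 1, n - 1} \<inter> {q. q \<in> E} = E" using sub by auto
    then have "card E = (\<Sum>q\<in>{0, 1, n - 1}. if q \<in> E then 1 else 0)" by (simp add: sum.If_cases)
    also have "\<dots> = of_bool (n - 1 \<in> E) + of_bool (0 \<in> E) + of_bool (1 \<in> E)"
      using dist by (simp add: of_bool_def)
    finally show ?thesis .
  qed
  have S4: "(\<Sum>l<n. card (W l)) = card (W 0) + card (W 1) + card (W 2) + (\<Sum>l\<in>{3..<n}. card (W l))"
  proof -
    have "{..<n} = {0, 1, 2} \<union> {3..<n}" using n3 by auto
    then have "(\<Sum>l<n. card (W l)) = (\<Sum>l\<in>{0, 1, 2}. card (W l)) + (\<Sum>l\<in>{3..<n}. card (W l))"
      by (simp add: sum.union_disjoint)
    then show ?thesis by simp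
  qed
  have S5: "(\<Sum>l\<in>{3..<n}. card (W l)) \<le> n - 3"
  proof -
    have "(\<Sum>l\<in>{3..<n}. card (W l)) \<le> (\<Sum>l\<in>{3..<n}. 1)" by (rule sum_mono) (use cW1 in auto)
    then show ?thesis by simp
  qed
  have ea1: "ea (n - 1) = 0" "eb (n - 1) = 1" using dist by (auto simp: ea_def eb_def)
  have cr: "coreB n (n - 1)" "coreB n 0" "coreB n 1" by (auto simp: coreB_def)
  have E0: "n - 1 \<in> E \<longleftrightarrow> Bf (x 0) (x 1) = 0" using n3 cr ea1 by (simp add: E_def Bpart_def)
  have E1: "0 \<in> E \<longleftrightarrow> Bf (x 1) (x 2) = 0" using n3 cr by (simp add: E_def Bpart_def ea_def eb_def)
  have E2: "1 \<in> E \<longleftrightarrow> Bf (x 2) (x 0) = 0" using n3 cr by (simp add: E_def Bpart_def ea_def eb_def)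
  have pin: "\<exists>q. mom 2 (of_real (tB q)) (x a) = 0" if "W a \<noteq> {}" for a
    using that by (auto simp: W_def)
  have n012: "0 < n" "1 < n" "2 < n" using n3 by auto
  note nz0 = nz[OF n012(1)] and nz1 = nz[OF n012(2)] and nz2 = nz[OF n012(3)]
  have C1: "\<not> (Bf (x a) (x b) = 0 \<and> W a \<noteq> {} \<and> W b \<noteq> {})" if "a < n" "b < n" for a b
  proof
    assume H: "Bf (x a) (x b) = 0 \<and> W a \<noteq> {} \<and> W b \<noteq> {}"
    obtain q where "mom 2 (of_real (tB q)) (x a) = 0" using pin H by blast
    moreover obtain q' where "mom 2 (of_real (tB q')) (x b) = 0" using pin H by blast
    ultimately show False using G1[of "tB q" "x a" "tB q'" "x b"] H nz that tB_range by blast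
  qed
  have C2: "\<not> (Bf (x a) (x b) = 0 \<and> Bf (x b) (x c) = 0 \<and> W a \<noteq> {} \<and> W c \<noteq> {})"
    if "a < n" "b < n" "c < n" for a b c
  proof
    assume H: "Bf (x a) (x b) = 0 \<and> Bf (x b) (x c) = 0 \<and> W a \<noteq> {} \<and> W c \<noteq> {}"
    obtain q where "mom 2 (of_real (tB q)) (x a) = 0" using pin H by blast
    moreover obtain q' where "mom 2 (of_real (tB q')) (x c) = 0" using pin H by blast
    ultimately show False using G2[of "tB q" "x a" "x b" "x c" "tB q'"] H nz that tB_range by blast
  qed
  have C3: "\<not> (Bf (x a) (x b) = 0 \<and> Bf (x b) (x c) = 0 \<and> Bf (x c) (x a) = 0 \<and> W a \<noteq> {})"
    if "a < n" "b < n" "c < n" for a b c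
  proof
    assume H: "Bf (x a) (x b) = 0 \<and> Bf (x b) (x c) = 0 \<and> Bf (x c) (x a) = 0 \<and> W a \<noteq> {}"
    obtain q where "mom 2 (of_real (tB q)) (x a) = 0" using pin H by blast
    then show False using G3[of "tB q" "x a" "x b" "x c"] H nz that by blast
  qed
  define w0 where "w0 \<longleftrightarrow> W 0 \<noteq> {}"
  define w1 where "w1 \<longleftrightarrow> W 1 \<noteq> {}"
  define w2 where "w2 \<longleftrightarrow> W 2 \<noteq> {}"
  define e0 where "e0 \<longleftrightarrow> Bf (x 0) (x 1) = 0"
  define e1 where "e1 \<longleftrightarrow> Bf (x 1) (x 2) = 0"
  define e2 where "e2 \<longleftrightarrow> Bf (x 2) (x 0) = 0"
  have tb: "of_bool w0 + of_bool w1 + of_bool w2 + of_bool e0 + of_bool e1 + of_bool e2 \<le> (3::nat)"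
  proof (rule tri_bound)
    show "\<not> (e0 \<and> w0 \<and> w1)" using C1[of 0 1] n012 unfolding e0_def w0_def w1_def by blast
    show "\<not> (e1 \<and> w1 \<and> w2)" using C1[of 1 2] n012 unfolding e1_def w1_def w2_def by blast
    show "\<not> (e2 \<and> w2 \<and> w0)" using C1[of 2 0] n012 unfolding e2_def w2_def w0_def by blast
    show "\<not> (e0 \<and> e1 \<and> w0 \<and> w2)" using C2[of 0 1 2] n012 unfolding e0_def e1_def w0_def w2_def by blast
    show "\<not> (e1 \<and> e2 \<and> w1 \<and> w0)" using C2[of 1 2 0] n012 unfolding e1_def e2_def w1_def w0_def by blast
    show "\<not> (e2 \<and> e0 \<and> w2 \<and> w1)" using C2[of 2 0 1] n012 unfolding e2_def e0_def w2_def w1_def by blast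
    show "\<not> (e0 \<and> e1 \<and> e2 \<and> (w0 \<or> w1 \<or> w2))"
      using C3[of 0 1 2] C3[of 1 2 0] C3[of 2 0 1] n012 unfolding e0_def e1_def e2_def w0_def w1_def w2_def by blast
  qed
  have T3: "card (W 0) + card (W 1) + card (W 2) + card E
      = of_bool w0 + of_bool w1 + of_bool w2 + of_bool e0 + of_bool e1 + of_bool e2"
    using cWb[OF n012(1)] cWb[OF n012(2)] cWb[OF n012(3)] S3 E0 E1 E2
    unfolding w0_def w1_def w2_def e0_def e1_def e2_def by simp
  have sumcnt: "(\<Sum>q<n. cnt q) = (card (W 0) + card (W 1) + card (W 2) + card E) + (\<Sum>l\<in>{3..<n}. card (W l))"
    unfolding cnt_def sum.distrib S1 S2 S4 by simp
  have low: "n \<le> (\<Sum>q<n. cnt q)"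
  proof -
    have "(\<Sum>q<n. (1::nat)) \<le> (\<Sum>q<n. cnt q)" by (rule sum_mono) (use cnt1 in auto)
    then show ?thesis by simp
  qed
  have tri3: "of_bool w0 + of_bool w1 + of_bool w2 + of_bool e0 + of_bool e1 + of_bool e2 = (3::nat)"
    using low sumcnt T3 tb S5 n3 by linarith
  have R: "(\<Sum>l\<in>{3..<n}. card (W l)) = (\<Sum>l\<in>{3..<n}. 1)"
    using low sumcnt T3 tb S5 n3 by simp
  have Rl: "card (W l) = 1" if "l \<in> {3..<n}" for l
    using sum_mono_inv[OF R _ that] cW1 that by auto
  have sumn: "(\<Sum>q<n. cnt q) = (\<Sum>q<n. 1)" using low sumcnt T3 tb S5 n3 tri3 by simp
  have cq: "cnt q = 1" if "q < n" for q
    using sum_mono_inv[OF sumn[symmetric], of q] cnt1 that by auto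
  have u1: "q \<notin> W l" if "q < n" "q \<in> E" for q l
  proof
    assume "q \<in> W l"
    then have "l < n" using AT_sub[of n q] by (auto simp: W_def)
    then have "{l} \<subseteq> {l\<in>{..<n}. q \<in> W l}" using \<open>q \<in> W l\<close> by auto
    then have "1 \<le> card {l\<in>{..<n}. q \<in> W l}" using card_mono[of "{l\<in>{..<n}. q \<in> W l}" "{l}"] by simp
    moreover have "cnt q = card {l\<in>{..<n}. q \<in> W l} + 1" using that(2) by (simp add: cnt_def)
    ultimately show False using cq[OF that(1)] by linarith
  qed
  have u2: "q \<notin> E \<and> (\<forall>l'<n. q \<in> W l' \<longrightarrow> l' = l)" if "q < n" "l < n" "q \<in> W l" for q l
  proof -
    have c1: "card {l\<in>{..<n}. q \<in> W l} + (if q \<in> E then 1 else 0) = 1" using cq[OF that(1)] by (simp add: cnt_def)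
    have "1 \<le> card {l\<in>{..<n}. q \<in> W l}"
      using card_mono[of "{l\<in>{..<n}. q \<in> W l}" "{l}"] that by auto
    then have nE: "q \<notin> E" using c1 by (auto split: if_splits)
    have "\<forall>l'<n. q \<in> W l' \<longrightarrow> l' = l"
    proof (intro allI impI)
      fix l' assume "l' < n" "q \<in> W l'"
      show "l' = l"
      proof (rule ccontr)
        assume "l' \<noteq> l"
        then have "card {l, l'} \<le> card {l\<in>{..<n}. q \<in> W l}"
          using \<open>l' < n\<close> \<open>q \<in> W l'\<close> that by (intro card_mono) auto
        then show False using c1 nE \<open>l' \<noteq> l\<close> by simp
      qed
    qed
    then show ?thesis using nE by blast
  qed
  show "\<forall>l<n. Gc n (x l) \<or> (\<exists>e. e * e = -1 \<and> prp (x l) (wv e))"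
  proof (intro allI impI)
    fix l assume l: "l < n"
    show "Gc n (x l) \<or> (\<exists>e. e * e = -1 \<and> prp (x l) (wv e))"
    proof (cases "l < 3")
      case False
      then have "card (W l) = 1" using Rl l by auto
      then obtain q where q: "q \<in> W l" by (metis card_1_singletonE insertI1)
      then have "q < n" "mom 2 (tc q) (x l) = 0" by (auto simp: W_def)
      then have "prp (x l) ((mv ^^ 0) (ptv (tc q)))" using pin_prp nz[OF l] by simp
      then have "Gc n (x l)" unfolding Gc_def using \<open>q < n\<close> by (intro exI[of _ 0]) auto
      then show ?thesis by blast
    next
      case True
      show ?thesis
      proof (cases "e0 \<and> e1 \<and> e2")
        case True
        then obtain e where e: "e * e = -1" "x 0 1 = e * x 0 0" "x 0 0 \<noteq> 0" "x 1 1 = e * x 1 0" "x 1 0 \<noteq> 0"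
            "x 2 1 = e * x 2 0" "x 2 0 \<noteq> 0"
          using full_tri[of "x 0" "x 1" "x 2"] nz0 nz1 nz2 unfolding e0_def e1_def e2_def by blast
        have pe: "prp (x a) (wv e)" if "x a 1 = e * x a 0" "x a 0 \<noteq> 0" for a
          unfolding prp_def wv_def using that by (intro exI[of _ "x a 0"]) auto
        have l3: "l = 0 \<or> l = 1 \<or> l = 2" using \<open>l < 3\<close> by auto
        then have "prp (x l) (wv e)" using e pe by blast
        then show ?thesis using e(1) by blast
      next
        case False
        have "Gc n (x 0) \<and> Gc n (x 1) \<and> Gc n (x 2)"
        proof (rule tri_close[OF tri3 False])
          show "\<not> (e0 \<and> w0 \<and> w1)" using C1[of 0 1] n012 unfolding e0_def w0_def w1_def by blast
          show "\<not> (e1 \<and> w1 \<and> w2)" using C1[of 1 2] n012 unfolding e1_def w1_def w2_def by blast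
          show "\<not> (e2 \<and> w2 \<and> w0)" using C1[of 2 0] n012 unfolding e2_def w2_def w0_def by blast
          have wp: "Gc n (x a)" if wa: "W a \<noteq> {}" "a < n" for a
          proof -
            obtain q where "q \<in> W a" using wa by blast
            then have "q < n" "mom 2 (tc q) (x a) = 0" by (auto simp: W_def)
            then have "prp (x a) ((mv ^^ 0) (ptv (tc q)))" using pin_prp nz[OF wa(2)] by simp
            then show ?thesis unfolding Gc_def using \<open>q < n\<close> by (intro exI[of _ 0]) auto
          qed
          show "w0 \<Longrightarrow> Gc n (x 0)" using wp n012 unfolding w0_def by blast
          show "w1 \<Longrightarrow> Gc n (x 1)" using wp n012 unfolding w1_def by blast
          show "w2 \<Longrightarrow> Gc n (x 2)" using wp n012 unfolding w2_def by blast
          show "e0 \<Longrightarrow> Gc n (x 0) \<longleftrightarrow> Gc n (x 1)" using cand_edge nz0 nz1 unfolding e0_def by blast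
          show "e1 \<Longrightarrow> Gc n (x 1) \<longleftrightarrow> Gc n (x 2)" using cand_edge nz1 nz2 unfolding e1_def by blast
          show "e2 \<Longrightarrow> Gc n (x 2) \<longleftrightarrow> Gc n (x 0)" using cand_edge nz2 nz0 unfolding e2_def by blast
        qed
        moreover have "l = 0 \<or> l = 1 \<or> l = 2" using \<open>l < 3\<close> by auto
        ultimately show ?thesis by blast
      qed
    qed
  qed
  show "\<forall>v. (\<forall>q<n. (\<Sum>m\<in>{0..<n} - {q}. Bpart n q (x(m := v m)) * Lpart n q (x(m := v m))) = 0)
           \<longrightarrow> (\<forall>l<n. Gt (v l) (x l))"
  proof (intro allI impI)
    fix v l
    assume D: "\<forall>q<n. (\<Sum>m\<in>{0..<n} - {q}. Bpart n q (x(m := v m)) * Lpart n q (x(m := v m))) = 0"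
      and l: "l < n"
    have T1: "mom 2 (tc q) (v a) = 0" if "q \<in> W a" "a < n" for q a
    proof -
      have q: "q < n" "a \<in> AT n q" "mom 2 (tc q) (x a) = 0" using that by (auto simp: W_def)
      note uu = u2[OF q(1) that(2) that(1)]
      have B: "Bpart n q x \<noteq> 0" using uu q(1) by (auto simp: E_def Bpart_def)
      have P: "(\<Prod>l'\<in>AT n q - {a}. mom 2 (tc q) (x l')) \<noteq> 0"
      proof
        assume "(\<Prod>l'\<in>AT n q - {a}. mom 2 (tc q) (x l')) = 0"
        then have "\<exists>l'\<in>AT n q - {a}. mom 2 (tc q) (x l') = 0"
          by (subst (asm) prod_zero_iff) (auto simp: finite_AT)
        then obtain l' where l': "l' \<in> AT n q" "l' \<noteq> a" "mom 2 (tc q) (x l') = 0" by blast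
        have "l' < n" using l'(1) AT_sub[of n q] by auto
        then have "q \<in> W l'" using l' q(1) by (auto simp: W_def)
        then show False using uu \<open>l' < n\<close> l'(2) by blast
      qed
      show ?thesis by (rule DB_pin[OF n3 q B P]) (use D q(1) in blast)
    qed
    have T2: "Bf (v (ea q)) (x (eb q)) + Bf (x (ea q)) (v (eb q)) = 0" if "q \<in> E" for q
    proof -
      have q: "q < n" "coreB n q" "Bpart n q x = 0" using that by (auto simp: E_def)
      have L: "Lpart n q x \<noteq> 0"
      proof
        assume "Lpart n q x = 0"
        then have "\<exists>l'\<in>AT n q. mom 2 (tc q) (x l') = 0" unfolding Lpart_def
          by (subst (asm) prod_zero_iff) (auto simp: finite_AT)
        then obtain l' where l': "l' \<in> AT n q" "mom 2 (tc q) (x l') = 0" by blast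
        have "l' < n" using l'(1) AT_sub[of n q] by auto
        then have "q \<in> W l'" using l' q(1) by (auto simp: W_def)
        then show False using u1[OF q(1) that] by blast
      qed
      show ?thesis by (rule DB_edge[OF n3 q L]) (use D q(1) in blast)
    qed
    have pinT: "Gt (v a) (x a)" if wa: "W a \<noteq> {}" "a < n" for a
    proof -
      obtain q where q: "q \<in> W a" using wa by blast
      then have "mom 2 (tc q) (x a) = 0" by (auto simp: W_def)
      then show ?thesis unfolding Gt_def using ker_pin[OF T1[OF q wa(2)] _ nz[OF wa(2)]] by blast
    qed
    have TE0: "Bf (v 0) (x 1) + Bf (x 0) (v 1) = 0" if e0 using T2[of "n - 1"] E0 ea1 that unfolding e0_def by simp
    have TE1: "Bf (v 1) (x 2) + Bf (x 1) (v 2) = 0" if e1 using T2[of 0] E1 that unfolding e1_def by (simp add: ea_def eb_def)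
    have TE2: "Bf (v 2) (x 0) + Bf (x 2) (v 0) = 0" if e2 using T2[of 1] E2 that unfolding e2_def by (simp add: ea_def eb_def)
    show "Gt (v l) (x l)"
    proof (cases "l < 3")
      case False
      then have "card (W l) = 1" using Rl l by auto
      then have "W l \<noteq> {}" by auto
      then show ?thesis using pinT l by blast
    next
      case True
      have tri: "Gt (v 0) (x 0) \<and> Gt (v 1) (x 1) \<and> Gt (v 2) (x 2)"
      proof (cases "e0 \<and> e1 \<and> e2")
        case True
        then obtain e where e: "e * e = -1" "x 0 1 = e * x 0 0" "x 0 0 \<noteq> 0" "x 1 1 = e * x 1 0" "x 1 0 \<noteq> 0"
            "x 2 1 = e * x 2 0" "x 2 0 \<noteq> 0"
          using full_tri[of "x 0" "x 1" "x 2"] nz0 nz1 nz2 unfolding e0_def e1_def e2_def by blast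
        have "v 0 1 - e * v 0 0 = 0 \<and> v 1 1 - e * v 1 0 = 0 \<and> v 2 1 - e * v 2 0 = 0"
        proof (rule circ[OF e(1) e(3) e(5) e(7)])
          show "- (1 + e) * x 1 0 * (v 0 1 - e * v 0 0) + (1 - e) * x 0 0 * (v 1 1 - e * v 1 0) = 0"
            using TE0 True Bf_e(1)[OF e(4) e(1), of "v 0"] Bf_e(2)[OF e(2) e(1), of "v 1"] by simp
          show "- (1 + e) * x 2 0 * (v 1 1 - e * v 1 0) + (1 - e) * x 1 0 * (v 2 1 - e * v 2 0) = 0"
            using TE1 True Bf_e(1)[OF e(6) e(1), of "v 1"] Bf_e(2)[OF e(4) e(1), of "v 2"] by simp
          show "- (1 + e) * x 0 0 * (v 2 1 - e * v 2 0) + (1 - e) * x 2 0 * (v 0 1 - e * v 0 0) = 0"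
            using TE2 True Bf_e(1)[OF e(2) e(1), of "v 2"] Bf_e(2)[OF e(6) e(1), of "v 0"] by simp
        qed
        then have s: "v 0 1 = e * v 0 0" "v 1 1 = e * v 1 0" "v 2 1 = e * v 2 0" by simp_all
        have g: "Gt (v a) (x a)" if "v a 1 = e * v a 0" "x a 1 = e * x a 0" "x a 0 \<noteq> 0" for a
          unfolding Gt_def using that by (intro exI[of _ "v a 0 / x a 0"]) auto
        show ?thesis using g s e by blast
      next
        case False
        show ?thesis
        proof (rule tri_close[OF tri3 False])
          show "\<not> (e0 \<and> w0 \<and> w1)" using C1[of 0 1] n012 unfolding e0_def w0_def w1_def by blast
          show "\<not> (e1 \<and> w1 \<and> w2)" using C1[of 1 2] n012 unfolding e1_def w1_def w2_def by blast
          show "\<not> (e2 \<and> w2 \<and> w0)" using C1[of 2 0] n012 unfolding e2_def w2_def w0_def by blast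
          show "w0 \<Longrightarrow> Gt (v 0) (x 0)" using pinT n012 unfolding w0_def by blast
          show "w1 \<Longrightarrow> Gt (v 1) (x 1)" using pinT n012 unfolding w1_def by blast
          show "w2 \<Longrightarrow> Gt (v 2) (x 2)" using pinT n012 unfolding w2_def by blast
          show "e0 \<Longrightarrow> Gt (v 0) (x 0) \<longleftrightarrow> Gt (v 1) (x 1)" using tan_edge TE0 nz0 nz1 unfolding e0_def by blast
          show "e1 \<Longrightarrow> Gt (v 1) (x 1) \<longleftrightarrow> Gt (v 2) (x 2)" using tan_edge TE1 nz1 nz2 unfolding e1_def by blast
          show "e2 \<Longrightarrow> Gt (v 2) (x 2) \<longleftrightarrow> Gt (v 0) (x 0)" using tan_edge TE2 nz2 nz0 unfolding e2_def by blast
        qed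
      qed
      moreover have "l = 0 \<or> l = 1 \<or> l = 2" using True by auto
      ultimately show ?thesis by blast
    qed
  qed
qed

lemma caseB:
  assumes n3: "n \<ge> 3" and d2: "\<And>l. l < n \<Longrightarrow> d l = 2"
  shows "\<exists>f :: nat \<Rightarrow> nat \<Rightarrow> (nat \<Rightarrow> nat) \<Rightarrow> real.
           reduced_dim0 n d f \<and>
           (\<exists>p q. in_Z n d f p \<and> in_Z n d f q \<and> \<not> proj_eq n d p q \<and>
                  \<not> real_point n d p \<and> \<not> real_point n d q)"
proof -
  define f where "f = (\<lambda>q (k::nat). fB n q)"
  have solZ: "in_Z n d f p \<longleftrightarrow> is_point n d p \<and> (\<forall>q<n. Bpart n q p * Lpart n q p = 0)" for p
  proof -
    have "(\<forall>i<n. \<forall>k<d i - 1. mlform n d i (f i k) p = 0) \<longleftrightarrow> (\<forall>q<n. Bpart n q p * Lpart n q p = 0)"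
      using d2 mlB[OF n3 _ d2] by (auto simp: f_def)
    then show ?thesis unfolding in_Z_def by blast
  qed
  have tan: "tangent_zero n d f p" if "in_Z n d f p" for p
  proof -
    have pt: "is_point n d p" and sol: "\<And>q. q < n \<Longrightarrow> Bpart n q p * Lpart n q p = 0"
      using that solZ by auto
    note ana = caseB_ana(2)[OF n3 d2 pt sol]
    show ?thesis unfolding tangent_zero_def
    proof (intro allI impI)
      fix v i assume D: "\<forall>i<n. \<forall>k<d i - 1. dform n d i (f i k) p v = 0" and i: "i < n"
      have "\<forall>q<n. (\<Sum>m\<in>{0..<n} - {q}. Bpart n q (p(m := v m)) * Lpart n q (p(m := v m))) = 0"
      proof (intro allI impI)
        fix q assume q: "q < n"
        have "dform n d q (f q 0) p v = 0" using D q d2[OF q] by simp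
        then show "(\<Sum>m\<in>{0..<n} - {q}. Bpart n q (p(m := v m)) * Lpart n q (p(m := v m))) = 0"
          unfolding dform_eq f_def using mlB[OF n3 q d2] by simp
      qed
      then have "Gt (v i) (p i)" using ana i by blast
      then obtain c where c: "v i 0 = c * p i 0" "v i 1 = c * p i 1" unfolding Gt_def by blast
      show "\<exists>c. \<forall>j<d i. v i j = c * p i j"
      proof (intro exI[of _ c] allI impI)
        fix j assume "j < d i"
        then have "j = 0 \<or> j = 1" using d2[OF i] by auto
        then show "v i j = c * p i j" using c by auto
      qed
    qed
  qed
  define C where "C = (\<lambda>(k, q). (mv ^^ k) (ptv (tc q))) ` ({..<4} \<times> {..<n}) \<union> {wv \<i>, wv (- \<i>)}"
  have fin: "\<exists>S. finite S \<and> (\<forall>p. in_Z n d f p \<longrightarrow> (\<exists>q\<in>S. proj_eq n d q p))"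
  proof (rule finite_pts[where C = "\<lambda>l. C"])
    fix p assume "in_Z n d f p"
    then have pt: "is_point n d p" and sol: "\<And>q. q < n \<Longrightarrow> Bpart n q p * Lpart n q p = 0"
      using solZ by auto
    note ana = caseB_ana(1)[OF n3 d2 pt sol]
    show "\<forall>l<n. \<exists>u\<in>C. \<exists>c. c \<noteq> 0 \<and> (\<forall>j<d l. p l j = c * u j)"
    proof (intro allI impI)
      fix l assume l: "l < n"
      have "\<exists>u\<in>C. prp (p l) u"
      proof (cases "Gc n (p l)")
        case True
        then obtain k q where "k < 4" "q < n" "prp (p l) ((mv ^^ k) (ptv (tc q)))" unfolding Gc_def by blast
        then show ?thesis unfolding C_def by force
      next
        case False
        then obtain e where e: "e * e = -1" "prp (p l) (wv e)" using ana l by blast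
        have "e = \<i> \<or> e = - \<i>" by (rule sqrt_m1[OF e(1)])
        then show ?thesis using e(2) unfolding C_def by auto
      qed
      then obtain u c where u: "u \<in> C" "c \<noteq> 0" "p l 0 = c * u 0" "p l 1 = c * u 1"
        unfolding prp_def by blast
      show "\<exists>u\<in>C. \<exists>c. c \<noteq> 0 \<and> (\<forall>j<d l. p l j = c * u j)"
      proof (intro bexI[OF _ u(1)] exI[of _ c] conjI allI impI)
        show "c \<noteq> 0" by (rule u(2))
        fix j assume "j < d l"
        then have "j = 0 \<or> j = 1" using d2[OF l] by auto
        then show "p l j = c * u j" using u by auto
      qed
    qed
  next
    fix l show "finite C" unfolding C_def by auto
  qed
  define P where "P = (\<lambda>l. if l < 3 then wv \<i> else ptv (tc (l - 1)))"
  have Ppt: "is_point n d P" unfolding is_point_def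
  proof (intro allI impI)
    fix l assume l: "l < n"
    have "P l 1 \<noteq> 0" by (simp add: P_def wv_def ptv_def)
    then show "\<exists>j<d l. P l j \<noteq> 0" using d2[OF l] by (intro exI[of _ 1]) auto
  qed
  have Psol: "Bpart n q P * Lpart n q P = 0" if q: "q < n" for q
  proof (cases "coreB n q")
    case True
    have "ea q < 3" "eb q < 3" by (auto simp: ea_def eb_def)
    then have "Bpart n q P = Bf (wv \<i>) (wv \<i>)" using True by (simp add: Bpart_def P_def)
    also have "\<dots> = 0" by (simp add: Bf_def wv_def algebra_simps)
    finally show ?thesis by simp
  next
    case False
    then have q2: "q \<noteq> 0" "q \<noteq> 1" "q \<noteq> n - 1" by (auto simp: coreB_def)
    have inA: "Suc q \<in> AT n q" using False q q2 by (auto simp: AT_def)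
    have "P (Suc q) = ptv (tc q)" using q2 by (simp add: P_def)
    then have "mom 2 (tc q) (P (Suc q)) = 0" by (simp add: mom2 ptv_def)
    then have "Lpart n q P = 0" unfolding Lpart_def
      by (rule prod_zero[OF finite_AT bexI[OF _ inA]])
    then show ?thesis by simp
  qed
  have PZ: "in_Z n d f P" using solZ Ppt Psol by blast
  have z0: "mom (d 0) \<i> (P 0) = 0" using d2[of 0] n3 by (simp add: mom2 P_def wv_def)
  have z1: "mom (d 0) (cnj \<i>) (P 0) \<noteq> 0" using d2[of 0] n3 by (simp add: mom2 P_def wv_def)
  have red: "reduced_dim0 n d f" unfolding reduced_dim0_def using PZ fin tan by blast
  show ?thesis using red two_points[OF PZ _ z0 z1] n3 by auto
qed

theorem lemma3p6:
  fixes n :: nat and d :: "nat \<Rightarrow> nat"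
  assumes "n \<ge> 3"
    and "2 \<le> d 0"
    and "\<And>i j. i \<le> j \<Longrightarrow> j < n \<Longrightarrow> d i \<le> d j"
    and "d (n - 1) - 1 \<le> (\<Sum>i<n - 1. d i - 1)"
  shows "\<exists>f :: nat \<Rightarrow> nat \<Rightarrow> (nat \<Rightarrow> nat) \<Rightarrow> real.
           reduced_dim0 n d f \<and>
           (\<exists>p q. in_Z n d f p \<and> in_Z n d f q \<and> \<not> proj_eq n d p q \<and>
                  \<not> real_point n d p \<and> \<not> real_point n d q)"
proof -
  have m0: "\<And>i. i < n \<Longrightarrow> d 0 \<le> d i" using assms(3) by simp
  have m1: "\<And>i. i < n \<Longrightarrow> d i \<le> d (n - 1)" using assms(1,3) by simp
  have dl: "\<And>l. l < n \<Longrightarrow> 2 \<le> d l" using m0 assms(2) order.trans by blast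
  show ?thesis
  proof (cases "3 \<le> d (n - 1)")
    case True
    show ?thesis by (rule caseA[OF assms(1) dl m0 m1 assms(4) True])
  next
    case False
    have "\<And>l. l < n \<Longrightarrow> d l = 2"
    proof -
      fix l assume "l < n"
      then show "d l = 2" using dl[of l] m1[of l] False by simp
    qed
    then show ?thesis by (rule caseB[OF assms(1)])
  qed
qed

end
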